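(* Let $e_1,e_2,e_3$ be complex numbers with $e_1+e_2+e_3=0$ for which the associated Weierstrass lattice is non-degenerate (two independent periods), and let $\wp(z)$ and $\zeta(z)$ be the Weierstrass elliptic and zeta functions with $\wp'(z)^2=4(\wp(z)-e_1)(\wp(z)-e_2)(\wp(z)-e_3)$ and $\zeta'(z)=-\wp(z)$, $\zeta$ odd. Let $w,\beta,q,\mu_1$ be arbitrary complex parameters and define, for $n=0,1,2,\dots$, $$u_n(t)=w^2n^2\big(\wp(w(t+\beta))-\wp(nw(t+\beta)+q)\big),$$ $$b_n(t)=\mu_1+w(n+1)\,\zeta\big(w(n+1)(t+\beta)+q\big)-wn\,\zeta\big(wn(t+\beta)+q\big)-(2n+1)w\,\zeta\big(w(t+\beta)\big).$$ Then $u_0=0$ and $u_n,b_n$ satisfy the Toda chain equations $$\dot u_n=u_n(b_n-b_{n-1})\ (n\ge1),\qquad \dot b_n=u_{n+1}-u_n\ (n\ge 0),$$ where the dot denotes differentiation with respect to $t$ (as identities of meromorphic functions of $t$). *)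

theory Defs
  imports "HOL-Analysis.Analysis"
begin

definition lattice :: "complex \<Rightarrow> complex \<Rightarrow> complex set" where
  "lattice w1 w2 = {of_int m * w1 + of_int n * w2 | m n. True}"

definition wp :: "complex \<Rightarrow> complex \<Rightarrow> complex \<Rightarrow> complex" where
  "wp w1 w2 z = 1 / z\<^sup>2 +
     (\<Sum>\<^sub>\<infinity>\<omega>\<in>lattice w1 w2 - {0}. 1 / (z - \<omega>)\<^sup>2 - 1 / \<omega>\<^sup>2)"

definition wzeta :: "complex \<Rightarrow> complex \<Rightarrow> complex \<Rightarrow> complex" where
  "wzeta w1 w2 z = 1 / z +
     (\<Sum>\<^sub>\<infinity>\<omega>\<in>lattice w1 w2 - {0}. 1 / (z - \<omega>) + 1 / \<omega> + z / \<omega>\<^sup>2)"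

definition toda_u ::
  "complex \<Rightarrow> complex \<Rightarrow> complex \<Rightarrow> complex \<Rightarrow> complex \<Rightarrow> nat \<Rightarrow> complex \<Rightarrow> complex" where
  "toda_u w1 w2 w \<beta> q n t =
     w\<^sup>2 * (of_nat n)\<^sup>2 * (wp w1 w2 (w * (t + \<beta>)) - wp w1 w2 (of_nat n * w * (t + \<beta>) + q))"

definition toda_b ::
  "complex \<Rightarrow> complex \<Rightarrow> complex \<Rightarrow> complex \<Rightarrow> complex \<Rightarrow> complex \<Rightarrow> nat \<Rightarrow> complex \<Rightarrow> complex" where
  "toda_b w1 w2 w \<beta> q \<mu>1 n t =
     \<mu>1 + w * (of_nat n + 1) * wzeta w1 w2 (w * (of_nat n + 1) * (t + \<beta>) + q)
        - w * of_nat n * wzeta w1 w2 (w * of_nat n * (t + \<beta>) + q)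
        - (2 * of_nat n + 1) * w * wzeta w1 w2 (w * (t + \<beta>))"

text \<open>Regular points: t is away from the poles of all functions involving the index k
  (the term with index 0 is multiplied by 0, so it is not a pole).\<close>
definition toda_regular ::
  "complex \<Rightarrow> complex \<Rightarrow> complex \<Rightarrow> complex \<Rightarrow> complex \<Rightarrow> nat \<Rightarrow> complex \<Rightarrow> bool" where
  "toda_regular w1 w2 w \<beta> q k t \<longleftrightarrow>
     w * (t + \<beta>) \<notin> lattice w1 w2 \<and>
     (k = 0 \<or> of_nat k * w * (t + \<beta>) + q \<notin> lattice w1 w2)"

end

theory Submission imports Defs "HOL-Complex_Analysis.Complex_Analysis" begin

locale wlat =
  fixes w1 w2 :: complex
  assumes nondeg: "Im (w2 / w1) \<noteq> 0"
begin

abbreviation "L \<equiv> lattice w1 w2"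

lemma w1_nz: "w1 \<noteq> 0" using nondeg by auto
lemma w2_nz: "w2 \<noteq> 0" using nondeg by auto

lemma lattice_iff: "z \<in> L \<longleftrightarrow> (\<exists>m n. z = of_int m * w1 + of_int n * w2)"
  by (auto simp: lattice_def)

lemma lat_0 [simp]: "0 \<in> L"
  unfolding lattice_iff by (rule exI[of _ 0], rule exI[of _ 0]) simp

lemma lat_w1 [simp]: "w1 \<in> L"
  unfolding lattice_iff by (rule exI[of _ 1], rule exI[of _ 0]) simp

lemma lat_add: "a \<in> L \<Longrightarrow> b \<in> L \<Longrightarrow> a + b \<in> L"
  unfolding lattice_iff
  by (auto, rule_tac x="m+ma" in exI, rule_tac x="n+na" in exI, simp add: algebra_simps)

lemma lat_uminus: "a \<in> L \<Longrightarrow> -a \<in> L"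
  unfolding lattice_iff
  by (auto, rule_tac x="-m" in exI, rule_tac x="-n" in exI, simp add: algebra_simps)

lemma lat_uminus_iff [simp]: "-a \<in> L \<longleftrightarrow> a \<in> L"
  using lat_uminus[of a] lat_uminus[of "-a"] by auto

lemma lat_diff: "a \<in> L \<Longrightarrow> b \<in> L \<Longrightarrow> a - b \<in> L"
  using lat_add[of a "-b"] lat_uminus[of b] by simp

lemma lat_shift: "a \<in> L \<Longrightarrow> z + a \<in> L \<longleftrightarrow> z \<in> L"
  using lat_add[of z a] lat_diff[of "z+a" a] by auto

lemma lat_shift': "a \<in> L \<Longrightarrow> z - a \<in> L \<longleftrightarrow> z \<in> L"
  using lat_shift[of "-a" z] by simp

lemma indep:
  assumes "of_real a * w1 + of_real b * w2 = 0"
  shows "a = 0 \<and> b = 0"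
proof (cases "b = 0")
  case True
  then show ?thesis using assms w1_nz by auto
next
  case False
  have "w2 = - (of_real a / of_real b) * w1" using assms False
    by (simp add: field_simps) (metis add.commute add_eq_0_iff mult.commute)
  then have "w2 / w1 = - of_real (a / b)" using w1_nz by simp
  then have "Im (w2 / w1) = 0" by simp
  then show ?thesis using nondeg by simp
qed

definition cL :: real where
  "cL = norm w1 / (1 + (1 + norm (w2/w1)) / \<bar>Im (w2/w1)\<bar>)"

lemma cL_pos: "cL > 0"
  unfolding cL_def using w1_nz nondeg by (auto intro!: divide_pos_pos add_pos_nonneg)

lemma lower:
  "cL * (\<bar>real_of_int m\<bar> + \<bar>real_of_int n\<bar>) \<le> norm (of_int m * w1 + of_int n * w2)"
proof -
  define \<tau> where "\<tau> = w2 / w1"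
  define t where "t = \<bar>Im \<tau>\<bar>"
  define z where "z = of_int m + of_int n * \<tau>"
  have t: "t > 0" using nondeg by (simp add: t_def \<tau>_def)
  have eq: "of_int m * w1 + of_int n * w2 = w1 * z"
    using w1_nz by (simp add: z_def \<tau>_def field_simps)
  have 1: "\<bar>real_of_int n\<bar> * t \<le> norm z"
  proof -
    have "Im z = of_int n * Im \<tau>" by (simp add: z_def)
    then have "\<bar>Im z\<bar> = \<bar>real_of_int n\<bar> * t" by (simp add: t_def abs_mult)
    then show ?thesis using abs_Im_le_cmod[of z] by simp
  qed
  have 2: "\<bar>real_of_int m\<bar> \<le> norm z + \<bar>real_of_int n\<bar> * norm \<tau>"
  proof -
    have "of_int m = z - of_int n * \<tau>" by (simp add: z_def)
    then have "norm (of_int m :: complex) \<le> norm z + norm (of_int n * \<tau>)"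
      by (metis norm_triangle_ineq4)
    then show ?thesis by (simp add: norm_mult)
  qed
  define K where "K = 1 + (1 + norm \<tau>) / t"
  have K: "K > 0" using t by (simp add: K_def add_pos_nonneg)
  have "\<bar>real_of_int m\<bar> + \<bar>real_of_int n\<bar> \<le> K * norm z"
  proof -
    have a: "\<bar>real_of_int n\<bar> \<le> norm z / t" using 1 t by (simp add: field_simps)
    have "\<bar>real_of_int n\<bar> * norm \<tau> \<le> norm z / t * norm \<tau>"
      using mult_right_mono[OF a norm_ge_zero[of \<tau>]] by simp
    then have "\<bar>real_of_int m\<bar> + \<bar>real_of_int n\<bar> \<le> norm z + norm z / t * norm \<tau> + norm z / t"
      using 2 a by linarith
    also have "\<dots> = K * norm z" by (simp add: K_def ring_distribs add_divide_distrib)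
    finally show ?thesis .
  qed
  then have "norm w1 * (\<bar>real_of_int m\<bar> + \<bar>real_of_int n\<bar>) / K \<le> norm w1 * norm z"
  proof -
    have "norm w1 * (\<bar>real_of_int m\<bar> + \<bar>real_of_int n\<bar>) \<le> norm w1 * (K * norm z)"
      using \<open>\<bar>real_of_int m\<bar> + \<bar>real_of_int n\<bar> \<le> K * norm z\<close> by (simp add: mult_left_mono)
    then show ?thesis using K by (simp add: divide_le_eq mult.commute mult.left_commute)
  qed
  moreover have "cL = norm w1 / K" by (simp add: cL_def K_def \<tau>_def t_def)
  ultimately show ?thesis by (simp add: eq norm_mult)
qed

lemma lat_norm_ge: "\<omega> \<in> L \<Longrightarrow> \<omega> \<noteq> 0 \<Longrightarrow> cL \<le> norm \<omega>"
proof -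
  assume "\<omega> \<in> L" "\<omega> \<noteq> 0"
  then obtain m n where \<omega>: "\<omega> = of_int m * w1 + of_int n * w2" by (auto simp: lattice_iff)
  then have "m \<noteq> 0 \<or> n \<noteq> 0" using \<open>\<omega> \<noteq> 0\<close> by auto
  then have "1 \<le> \<bar>real_of_int m\<bar> + \<bar>real_of_int n\<bar>" by linarith
  then have "cL \<le> cL * (\<bar>real_of_int m\<bar> + \<bar>real_of_int n\<bar>)" using cL_pos by simp
  then show ?thesis using lower[of m n] \<omega> by simp
qed

lemma lat_finite: "finite {\<omega>\<in>L. norm \<omega> \<le> R}"
proof -
  define K where "K = \<lceil>R / cL\<rceil>"
  have "{\<omega>\<in>L. norm \<omega> \<le> R} \<subseteq> (\<lambda>(m,n). of_int m * w1 + of_int n * w2) ` ({-K..K} \<times> {-K..K})"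
  proof
    fix \<omega> assume "\<omega> \<in> {\<omega>\<in>L. norm \<omega> \<le> R}"
    then obtain m n where \<omega>: "\<omega> = of_int m * w1 + of_int n * w2" and nR: "norm \<omega> \<le> R"
      by (auto simp: lattice_iff)
    have "cL * (\<bar>real_of_int m\<bar> + \<bar>real_of_int n\<bar>) \<le> R" using lower[of m n] \<omega> nR by simp
    then have "\<bar>real_of_int m\<bar> + \<bar>real_of_int n\<bar> \<le> R / cL" using cL_pos by (simp add: field_simps)
    then have "\<bar>real_of_int m\<bar> \<le> R / cL" "\<bar>real_of_int n\<bar> \<le> R / cL" by linarith+
    then have "\<bar>m\<bar> \<le> K" "\<bar>n\<bar> \<le> K" unfolding K_def by linarith+
    then show "\<omega> \<in> (\<lambda>(m,n). of_int m * w1 + of_int n * w2) ` ({-K..K} \<times> {-K..K})"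
      using \<omega> by (auto intro!: image_eqI[of _ _ "(m,n)"])
  qed
  then show ?thesis by (rule finite_subset) auto
qed

lemma lat_closed: "closed L"
proof (rule discrete_imp_closed[OF cL_pos], intro ballI impI)
  fix x y assume "x \<in> L" "y \<in> L" "dist y x < cL"
  then show "y = x" using lat_norm_ge[of "y - x"] lat_diff[of y x] by (force simp: dist_norm)
qed

lemma lat0_closed: "closed (L - {0})"
proof (rule discrete_imp_closed[OF cL_pos], intro ballI impI)
  fix x y assume "x \<in> L - {0}" "y \<in> L - {0}" "dist y x < cL"
  then show "y = x" using lat_norm_ge[of "y - x"] lat_diff[of y x] by (force simp: dist_norm)
qed

lemma lat_countable: "countable L"
proof -
  have "L = (\<lambda>(m,n). of_int m * w1 + of_int n * w2) ` (UNIV :: (int \<times> int) set)"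
    by (auto simp: lattice_def)
  then show ?thesis by simp
qed

lemma lat0_infinite: "infinite (L - {0})"
proof
  assume fin: "finite (L - {0})"
  have "(\<lambda>k::int. of_int k * w1) ` (UNIV - {0}) \<subseteq> L - {0}"
  proof
    fix x assume "x \<in> (\<lambda>k::int. of_int k * w1) ` (UNIV - {0})"
    then obtain k where k: "k \<noteq> 0" "x = of_int k * w1" by auto
    have "x \<in> L" unfolding lattice_iff using k by (intro exI[of _ k] exI[of _ 0]) simp
    then show "x \<in> L - {0}" using k w1_nz by simp
  qed
  moreover have "inj_on (\<lambda>k::int. of_int k * w1) (UNIV - {0})"
    using w1_nz by (auto simp: inj_on_def)
  ultimately have "finite (UNIV - {0::int})"
    using fin by (metis finite_imageD finite_subset)
  then show False by simp
qed

lemma G_inj: "inj (\<lambda>(m::int,n::int). of_int m * w1 + of_int n * w2)"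
proof (rule injI, clarsimp)
  fix m n m' n' :: int
  assume "of_int m * w1 + of_int n * w2 = of_int m' * w1 + of_int n' * w2"
  then have "of_real (real_of_int (m - m')) * w1 + of_real (real_of_int (n - n')) * w2 = 0"
    by (simp add: algebra_simps)
  then show "m = m' \<and> n = n'" using indep by fastforce
qed

lemma L0_image: "L - {0} = (\<lambda>(m::int,n::int). of_int m * w1 + of_int n * w2) ` (UNIV - {(0,0)})"
proof -
  have "L = (\<lambda>(m::int,n::int). of_int m * w1 + of_int n * w2) ` UNIV" by (auto simp: lattice_def)
  moreover have "(\<lambda>(m::int,n::int). of_int m * w1 + of_int n * w2) (0,0) = 0" by simp
  ultimately show ?thesis using G_inj by (simp add: image_set_diff)
qed

end

definition ff :: "int \<Rightarrow> real" where
  "ff m = 1 / ((1 + \<bar>real_of_int m\<bar>) * sqrt (1 + \<bar>real_of_int m\<bar>))"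

lemma ff_nat_summable: "summable (\<lambda>n::nat. 1 / ((1 + real n) * sqrt (1 + real n)))"
proof -
  have "summable (\<lambda>n::nat. real n powr (-3/2))" by (simp add: summable_real_powr_iff)
  then have "summable (\<lambda>n::nat. real (Suc n) powr (-3/2))" by (rule iffD2[OF summable_Suc_iff])
  moreover have "real (Suc n) powr (-3/2) = 1 / ((1 + real n) * sqrt (1 + real n))" for n
  proof -
    have "real (Suc n) powr (3/2) = real (Suc n) powr (1 + 1/2)" by simp
    also have "\<dots> = real (Suc n) * sqrt (real (Suc n))"
      by (simp only: powr_add powr_half_sqrt) simp
    finally show ?thesis by (simp add: powr_minus_divide)
  qed
  ultimately show ?thesis by simp
qed

lemma ff_summable: "ff summable_on UNIV"
proof -
  let ?g = "\<lambda>n::nat. 1 / ((1 + real n) * sqrt (1 + real n))"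
  have g: "?g summable_on UNIV"
    using ff_nat_summable by (subst summable_on_UNIV_nonneg_real_iff) auto
  have UN: "(UNIV::int set) = int ` UNIV \<union> (\<lambda>n. - int n) ` UNIV"
  proof (rule set_eqI)
    fix x :: int
    show "x \<in> UNIV \<longleftrightarrow> x \<in> int ` UNIV \<union> (\<lambda>n. - int n) ` UNIV"
    proof (cases "x \<ge> 0")
      case True then have "x = int (nat x)" by simp
      then show ?thesis by blast
    next
      case False then have "x = - int (nat (-x))" by simp
      then show ?thesis by blast
    qed
  qed
  have 1: "ff summable_on (int ` UNIV)"
    by (subst summable_on_reindex) (auto simp: o_def ff_def g)
  have 2: "ff summable_on ((\<lambda>n. - int n) ` UNIV)"
    by (subst summable_on_reindex) (auto simp: o_def ff_def g inj_on_def)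
  show ?thesis using summable_on_union[OF 1 2] UN by simp
qed

lemma ff_pos: "ff m > 0" by (simp add: ff_def)

lemma ff_prod_summable: "(\<lambda>(m,n). ff m * ff n) summable_on UNIV"
proof -
  have a: "Infinite_Set_Sum.abs_summable_on ff UNIV"
    using ff_summable abs_summable_equivalent[of ff UNIV] ff_pos
    by (simp add: abs_of_pos less_imp_le)
  have "Infinite_Set_Sum.abs_summable_on (\<lambda>(m,n). ff m * ff n) (UNIV \<times> UNIV)"
    by (rule abs_summable_on_product) (use a in auto)
  then have "Infinite_Sum.abs_summable_on (\<lambda>(m,n). ff m * ff n) (UNIV \<times> UNIV)"
    using abs_summable_equivalent by blast
  then show ?thesis unfolding case_prod_beta by (simp add: abs_of_pos ff_pos UNIV_Times_UNIV[symmetric] del: UNIV_Times_UNIV)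
qed

lemma ff_bound:
  fixes m n :: int
  assumes "(m, n) \<noteq> (0, 0)"
  shows "1 / (\<bar>real_of_int m\<bar> + \<bar>real_of_int n\<bar>) ^ 3 \<le> 8 * (ff m * ff n)"
proof -
  define s where "s = \<bar>real_of_int m\<bar> + \<bar>real_of_int n\<bar>"
  define a where "a = 1 + \<bar>real_of_int m\<bar>"
  define b where "b = 1 + \<bar>real_of_int n\<bar>"
  have s1: "s \<ge> 1" using assms unfolding s_def by auto
  have a1: "a \<ge> 1" and b1: "b \<ge> 1" by (auto simp: a_def b_def)
  have ab: "a * b \<le> (2 * s)^2"
  proof -
    have "a * b \<le> (1 + s)^2" unfolding a_def b_def s_def by (simp add: power2_eq_square algebra_simps)
    also have "\<dots> \<le> (2 * s)^2" using s1 by (intro power_mono) auto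
    finally show ?thesis .
  qed
  have sq: "sqrt a * sqrt b \<le> 2 * s"
  proof -
    have "sqrt a * sqrt b = sqrt (a*b)" by (simp add: real_sqrt_mult)
    also have "\<dots> \<le> sqrt ((2 * s)^2)" using ab by simp
    also have "\<dots> = \<bar>2 * s\<bar>" by (rule real_sqrt_abs)
    also have "\<dots> = 2 * s" using s1 by simp
    finally show ?thesis .
  qed
  have "(a * sqrt a) * (b * sqrt b) = (a*b) * (sqrt a * sqrt b)" by (simp add: algebra_simps)
  also have "\<dots> \<le> (2 * s)^2 * (2 * s)"
    using a1 b1 by (intro mult_mono[OF ab sq]) auto
  also have "\<dots> = 8 * s^3" by (simp add: power2_eq_square power3_eq_cube)
  finally have le: "(a * sqrt a) * (b * sqrt b) \<le> 8 * s^3" .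
  have pos: "(a * sqrt a) * (b * sqrt b) > 0" using a1 b1 by simp
  have "1 / s^3 \<le> 8 / ((a * sqrt a) * (b * sqrt b))"
    using le pos s1 by (simp add: field_simps)
  then show ?thesis by (simp add: ff_def s_def a_def b_def)
qed

context wlat begin

lemma lat_summable3: "(\<lambda>\<omega>. 1 / norm \<omega> ^ 3) summable_on (L - {0})"
proof -
  let ?G = "\<lambda>(m::int,n::int). of_int m * w1 + of_int n * w2"
  have "((\<lambda>\<omega>. 1 / norm \<omega> ^ 3) \<circ> ?G) summable_on (UNIV - {(0,0)})"
  proof (rule summable_on_comparison_test)
    show "(\<lambda>p. (8 / cL^3) * (case p of (m,n) \<Rightarrow> ff m * ff n)) summable_on (UNIV - {(0,0)})"
      by (rule summable_on_cmult_right, rule summable_on_subset_banach[OF ff_prod_summable]) auto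
  next
    fix p assume p: "p \<in> UNIV - {(0::int,0::int)}"
    obtain m n where pmn: "p = (m,n)" by force
    have nz: "(m,n) \<noteq> (0,0)" using p pmn by simp
    define s where "s = \<bar>real_of_int m\<bar> + \<bar>real_of_int n\<bar>"
    have s1: "s \<ge> 1" using nz unfolding s_def by auto
    have low: "cL * s \<le> norm (?G (m,n))" using lower[of m n] by (simp add: s_def)
    have cs: "cL * s > 0" using s1 cL_pos by simp
    have p3: "(cL * s) ^ 3 \<le> norm (?G (m,n)) ^ 3" by (rule power_mono[OF low]) (use cs in auto)
    have p0: "0 < (cL * s) ^ 3" using cs by simp
    have "1 / norm (?G (m,n)) ^ 3 \<le> 1 / (cL * s) ^ 3"
      using p3 p0 by (intro divide_left_mono) (auto intro!: mult_pos_pos)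
    also have "\<dots> = (1 / cL^3) * (1 / s^3)" by (simp add: power_mult_distrib)
    also have "\<dots> \<le> (1 / cL^3) * (8 * (ff m * ff n))"
      using ff_bound[OF nz] cL_pos by (intro mult_left_mono) (auto simp: s_def)
    finally show "((\<lambda>\<omega>. 1 / norm \<omega> ^ 3) \<circ> ?G) p \<le> (8 / cL^3) * (case p of (m,n) \<Rightarrow> ff m * ff n)"
      by (simp add: pmn)
  qed auto
  then show ?thesis
    by (subst L0_image, subst summable_on_reindex) (auto intro: inj_on_subset[OF G_inj])
qed

lemma lat_summable_bound:
  assumes "\<And>\<omega>. \<omega> \<in> L - {0} \<Longrightarrow> R \<le> norm \<omega> \<Longrightarrow> norm (f \<omega>) \<le> C / norm \<omega> ^ 3"
  shows "(f :: complex \<Rightarrow> complex) summable_on (L - {0})"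
proof -
  define A1 where "A1 = {\<omega>\<in>L-{0}. norm \<omega> < R}"
  define A2 where "A2 = {\<omega>\<in>L-{0}. R \<le> norm \<omega>}"
  have "finite A1" unfolding A1_def by (rule finite_subset[OF _ lat_finite[of R]]) auto
  then have 1: "f summable_on A1" by simp
  have "(\<lambda>\<omega>. C * (1 / norm \<omega> ^ 3)) summable_on A2"
    by (rule summable_on_cmult_right, rule summable_on_subset_banach[OF lat_summable3]) (auto simp: A2_def)
  then have "(\<lambda>\<omega>. norm (f \<omega>)) summable_on A2"
    by (rule summable_on_comparison_test) (use assms in \<open>auto simp: A2_def\<close>)
  then have 2: "f summable_on A2" by (rule abs_summable_summable)
  have "L - {0} = A1 \<union> A2" by (auto simp: A1_def A2_def)
  then show ?thesis using summable_on_union[OF 1 2] by simp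
qed

end

lemma infsum_deriv:
  fixes f f' :: "'i \<Rightarrow> complex \<Rightarrow> complex" and M M' :: "'i \<Rightarrow> real"
  assumes A: "countable A" "infinite A" and S: "open S"
    and der: "\<And>\<omega> z. \<omega> \<in> A \<Longrightarrow> z \<in> S \<Longrightarrow> (f \<omega> has_field_derivative f' \<omega> z) (at z)"
    and F: "finite F"
    and bd: "\<And>\<omega> z. \<omega> \<in> A - F \<Longrightarrow> z \<in> S \<Longrightarrow> norm (f \<omega> z) \<le> M \<omega>"
    and bd': "\<And>\<omega> z. \<omega> \<in> A - F \<Longrightarrow> z \<in> S \<Longrightarrow> norm (f' \<omega> z) \<le> M' \<omega>"
    and sM: "M summable_on A" and sM': "M' summable_on A"
    and z: "z \<in> S"
  shows "((\<lambda>z. \<Sum>\<^sub>\<infinity>\<omega>\<in>A. f \<omega> z) has_field_derivative (\<Sum>\<^sub>\<infinity>\<omega>\<in>A. f' \<omega> z)) (at z)"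
proof -
  define e where "e = from_nat_into A"
  have bij: "bij_betw e UNIV A" unfolding e_def by (rule bij_betw_from_nat_into[OF A])
  have sumh: "summable (\<lambda>n. norm (M (e n)))" if "M summable_on A" for M :: "'i \<Rightarrow> real"
  proof -
    have "(\<lambda>\<omega>. norm (M \<omega>)) summable_on A"
      using that summable_on_iff_abs_summable_on_real by blast
    then have "(\<lambda>n. norm (M (e n))) summable_on UNIV"
      using summable_on_reindex_bij_betw[OF bij, of "\<lambda>\<omega>. norm (M \<omega>)"] by simp
    then show ?thesis by (subst (asm) summable_on_UNIV_nonneg_real_iff) auto
  qed
  have fin: "finite (e -` F)"
    using F bij by (intro finite_vimageI) (auto simp: bij_betw_def)
  obtain N where N: "\<And>n. n \<in> e -` F \<Longrightarrow> n < N"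
    using finite_nat_bounded[OF fin] by auto
  have ev: "\<forall>\<^sub>F n in sequentially. e n \<notin> F"
    unfolding eventually_sequentially
  proof (intro exI allI impI)
    fix n assume "N \<le> n" then show "e n \<notin> F" using N[of n] by auto
  qed
  have eA: "e n \<in> A" for n using bij by (auto simp: bij_betw_def)
  obtain g g' where gg: "\<forall>x \<in> S. ((\<lambda>n. f (e n) x) sums g x) \<and> ((\<lambda>n. f' (e n) x) sums g' x)
       \<and> (g has_field_derivative g' x) (at x)"
  proof (rule series_and_derivative_comparison[OF S sumh[OF sM]])
    show "\<And>n x. x \<in> S \<Longrightarrow> (f (e n) has_field_derivative f' (e n) x) (at x)"
      using der eA by blast
    show "\<forall>\<^sub>F n in sequentially. \<forall>x\<in>S. norm (f (e n) x) \<le> norm (M (e n))"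
      using ev
    proof eventually_elim
      case (elim n)
      then show ?case using bd[of "e n"] eA[of n] abs_ge_self[of "M (e n)"]
        by (auto intro: order_trans)
    qed
  qed (erule that)
  have hs: "((\<lambda>\<omega>. h \<omega> x) has_sum G) A"
    if "x \<in> S" and sums: "(\<lambda>n. h (e n) x) sums G"
      and hb: "\<And>\<omega>. \<omega> \<in> A - F \<Longrightarrow> norm (h \<omega> x) \<le> K \<omega>" and sK: "K summable_on A"
    for h :: "'i \<Rightarrow> complex \<Rightarrow> complex" and G x K
  proof -
    have "summable (\<lambda>n. norm (h (e n) x))"
    proof (rule summable_comparison_test_ev[OF _ sumh[OF sK]])
      show "\<forall>\<^sub>F n in sequentially. norm (norm (h (e n) x)) \<le> norm (K (e n))"
        using ev
      proof eventually_elim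
        case (elim n)
        then show ?case using hb[of "e n"] eA[of n] abs_ge_self[of "K (e n)"]
          by (auto intro: order_trans)
      qed
    qed
    then have "((\<lambda>n. h (e n) x) has_sum G) UNIV"
      by (rule norm_summable_imp_has_sum[OF _ sums])
    then show ?thesis using has_sum_reindex_bij_betw[OF bij, of "\<lambda>\<omega>. h \<omega> x" G] by simp
  qed
  have eq: "(\<Sum>\<^sub>\<infinity>\<omega>\<in>A. f \<omega> x) = g x" if "x \<in> S" for x
  proof (rule infsumI, rule hs[OF that, of f "g x" M])
    show "(\<lambda>n. f (e n) x) sums g x" using gg that by blast
  qed (use bd sM that in auto)
  have eq': "(\<Sum>\<^sub>\<infinity>\<omega>\<in>A. f' \<omega> z) = g' z"
  proof (rule infsumI, rule hs[OF z, of f' "g' z" M'])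
    show "(\<lambda>n. f' (e n) z) sums g' z" using gg z by blast
  qed (use bd' sM' z in auto)
  have "(g has_field_derivative g' z) (at z)" using gg z by blast
  then show ?thesis unfolding eq'
    by (rule has_field_derivative_transform_within_open[OF _ S z]) (simp add: eq)
qed


lemma term_bounds:
  fixes z \<omega> :: complex
  assumes zR: "norm z \<le> R" and R\<omega>: "2 * R \<le> norm \<omega>" and \<omega>0: "\<omega> \<noteq> 0"
  shows "norm (1/(z-\<omega>)^2 - 1/\<omega>^2) \<le> 10 * R / norm \<omega> ^ 3"
    and "norm (-2/(z-\<omega>)^3) \<le> 16 / norm \<omega> ^ 3"
    and "norm (1/(z-\<omega>) + 1/\<omega> + z/\<omega>^2) \<le> 2 * R^2 / norm \<omega> ^ 3"
    and "norm (-1/(z-\<omega>)^2 + 1/\<omega>^2) \<le> 10 * R / norm \<omega> ^ 3"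
proof -
  define a where "a = norm \<omega>"
  define d where "d = norm (z - \<omega>)"
  have R0: "0 \<le> R" using zR norm_ge_zero order_trans by blast
  have a0: "a > 0" using \<omega>0 by (simp add: a_def)
  have "norm \<omega> - norm z \<le> norm (\<omega> - z)" by (rule norm_triangle_ineq2)
  then have da: "a / 2 \<le> d" using zR R\<omega> by (simp add: a_def d_def norm_minus_commute)
  have d0: "d > 0" using da a0 by linarith
  have z\<omega>: "z \<noteq> \<omega>" using d0 by (auto simp: d_def)
  have zw0: "z - \<omega> \<noteq> 0" using z\<omega> by simp
  have 1: "1/(z-\<omega>)^2 - 1/\<omega>^2 = z * (2*\<omega> - z) / (\<omega>^2 * (z-\<omega>)^2)"
    using zw0 \<omega>0 by (simp add: divide_simps) (simp add: power2_eq_square algebra_simps)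
  have n2: "norm (2*\<omega> - z) \<le> 5/2 * a"
  proof -
    have "norm (2*\<omega> - z) \<le> norm (2*\<omega>) + norm z" by (rule norm_triangle_ineq4)
    then show ?thesis using zR R\<omega> by (simp add: a_def norm_mult)
  qed
  show B1: "norm (1/(z-\<omega>)^2 - 1/\<omega>^2) \<le> 10 * R / norm \<omega> ^ 3"
  proof -
    have "norm (1/(z-\<omega>)^2 - 1/\<omega>^2) = (norm z * norm (2*\<omega> - z)) / (a^2 * d^2)"
      unfolding 1 by (simp add: norm_mult norm_divide norm_power a_def d_def)
    also have "\<dots> \<le> (R * (5/2 * a)) / (a^2 * (a/2)^2)"
      using zR n2 a0 da R0
      by (intro frac_le mult_mono mult_left_mono power_mono) auto
    also have "\<dots> = 10 * R / a ^ 3" using a0 by (simp add: field_simps power2_eq_square power3_eq_cube)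
    finally show ?thesis by (simp add: a_def)
  qed
  show "norm (-2/(z-\<omega>)^3) \<le> 16 / norm \<omega> ^ 3"
  proof -
    have "norm (-2/(z-\<omega>)^3) = 2 / d^3" by (simp add: norm_divide norm_power d_def)
    also have "\<dots> \<le> 2 / (a/2)^3" using da a0 by (intro divide_left_mono power_mono mult_pos_pos) auto
    also have "\<dots> = 16 / a^3" by (simp add: field_simps)
    finally show ?thesis by (simp add: a_def)
  qed
  show "norm (1/(z-\<omega>) + 1/\<omega> + z/\<omega>^2) \<le> 2 * R^2 / norm \<omega> ^ 3"
  proof -
    have 3: "1/(z-\<omega>) + 1/\<omega> + z/\<omega>^2 = z^2 / (\<omega>^2 * (z-\<omega>))"
      using zw0 \<omega>0 by (simp add: divide_simps) (simp add: power2_eq_square algebra_simps)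
    have "norm (1/(z-\<omega>) + 1/\<omega> + z/\<omega>^2) = norm z ^ 2 / (a^2 * d)"
      unfolding 3 by (simp add: norm_mult norm_divide norm_power a_def d_def)
    also have "\<dots> \<le> R^2 / (a^2 * (a/2))"
      using zR a0 da R0 by (intro frac_le mult_left_mono power_mono) auto
    also have "\<dots> = 2 * R^2 / a ^ 3" using a0 by (simp add: field_simps power2_eq_square power3_eq_cube)
    finally show ?thesis by (simp add: a_def)
  qed
  have "-1/(z-\<omega>)^2 + 1/\<omega>^2 = - (1/(z-\<omega>)^2 - 1/\<omega>^2)" by simp
  then show "norm (-1/(z-\<omega>)^2 + 1/\<omega>^2) \<le> 10 * R / norm \<omega> ^ 3"
    using B1 by (simp only: norm_minus_cancel)
qed


lemma d1: "z \<noteq> \<omega> \<Longrightarrow> ((\<lambda>z. 1/(z-\<omega>)^2 - 1/\<omega>^2) has_field_derivative -2/(z-\<omega>)^3) (at z)"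
  for z \<omega> :: complex
  apply (rule derivative_eq_intros refl | simp)+
  apply (simp add: divide_simps)
  apply (simp add: eval_nat_numeral algebra_simps)
  done

lemma d2: "z \<noteq> \<omega> \<Longrightarrow> \<omega> \<noteq> 0 \<Longrightarrow> ((\<lambda>z. 1/(z-\<omega>) + 1/\<omega> + z/\<omega>^2) has_field_derivative -1/(z-\<omega>)^2 + 1/\<omega>^2) (at z)"
  for z \<omega> :: complex
  apply (rule derivative_eq_intros refl | simp)+
  apply (simp add: divide_simps)
  apply (simp add: eval_nat_numeral algebra_simps)
  done

lemma d0: "z \<noteq> 0 \<Longrightarrow> ((\<lambda>z. 1/z^2) has_field_derivative -2/z^3) (at z)"
  for z :: complex
  apply (rule derivative_eq_intros refl | simp)+
  apply (simp add: divide_simps)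
  apply (simp add: eval_nat_numeral algebra_simps)
  done

lemma d0': "z \<noteq> 0 \<Longrightarrow> ((\<lambda>z. 1/z) has_field_derivative -1/z^2) (at z)"
  for z :: complex
  apply (rule derivative_eq_intros refl | simp)+
  apply (simp add: divide_simps power2_eq_square)
  done

context wlat begin

lemma lat_summ:
  assumes bd: "\<And>\<omega> R. norm z \<le> R \<Longrightarrow> 2*R \<le> norm \<omega> \<Longrightarrow> \<omega> \<noteq> 0 \<Longrightarrow> norm (f \<omega>) \<le> C R / norm \<omega>^3"
  shows "(f :: complex \<Rightarrow> complex) summable_on (L - {0})"
  by (rule lat_summable_bound[of "2 * norm z"]) (use bd[of "norm z"] in auto)

lemma lat_deriv:
  assumes der: "\<And>\<omega> z. \<omega> \<in> L-{0} \<Longrightarrow> z \<noteq> \<omega> \<Longrightarrow> (f \<omega> has_field_derivative f' \<omega> z) (at z)"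
    and bd: "\<And>\<omega> z R. norm z \<le> R \<Longrightarrow> 2*R \<le> norm \<omega> \<Longrightarrow> \<omega> \<noteq> 0 \<Longrightarrow> norm (f \<omega> z) \<le> C R / norm \<omega>^3"
    and bd': "\<And>\<omega> z R. norm z \<le> R \<Longrightarrow> 2*R \<le> norm \<omega> \<Longrightarrow> \<omega> \<noteq> 0 \<Longrightarrow> norm (f' \<omega> z) \<le> C' R / norm \<omega>^3"
    and z: "z \<notin> L - {0}"
  shows "((\<lambda>z. \<Sum>\<^sub>\<infinity>\<omega>\<in>L-{0}. f \<omega> z) has_field_derivative (\<Sum>\<^sub>\<infinity>\<omega>\<in>L-{0}. f' \<omega> z)) (at z)"
proof -
  define R where "R = norm z + 1"
  define S where "S = ball 0 R - (L - {0})"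
  define F where "F = {\<omega>\<in>L-{0}. norm \<omega> \<le> 2*R}"
  have S: "open S" unfolding S_def using lat0_closed by auto
  have zS: "z \<in> S" using z by (simp add: S_def R_def)
  have F: "finite F" unfolding F_def by (rule finite_subset[OF _ lat_finite[of "2*R"]]) auto
  show ?thesis
  proof (rule infsum_deriv[where M="\<lambda>\<omega>. C R * (1 / norm \<omega>^3)" and M'="\<lambda>\<omega>. C' R * (1 / norm \<omega>^3)",
        OF countable_subset[OF _ lat_countable] lat0_infinite S _ F _ _ _ _ zS])
    show "L - {0} \<subseteq> L" by auto
    show "\<And>\<omega> z. \<omega> \<in> L - {0} \<Longrightarrow> z \<in> S \<Longrightarrow> (f \<omega> has_field_derivative f' \<omega> z) (at z)"
    proof -
      fix \<omega> z assume a: "\<omega> \<in> L - {0}" "z \<in> S"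
      then have "z \<noteq> \<omega>" by (auto simp: S_def)
      then show "(f \<omega> has_field_derivative f' \<omega> z) (at z)" using der a(1) by blast
    qed
    show "\<And>\<omega> z. \<omega> \<in> L - {0} - F \<Longrightarrow> z \<in> S \<Longrightarrow> norm (f \<omega> z) \<le> C R * (1 / norm \<omega>^3)"
      using bd by (auto simp: S_def F_def)
    show "\<And>\<omega> z. \<omega> \<in> L - {0} - F \<Longrightarrow> z \<in> S \<Longrightarrow> norm (f' \<omega> z) \<le> C' R * (1 / norm \<omega>^3)"
      using bd' by (auto simp: S_def F_def)
    show "(\<lambda>\<omega>. C R * (1 / norm \<omega>^3)) summable_on L - {0}"
      by (rule summable_on_cmult_right[OF lat_summable3])
    show "(\<lambda>\<omega>. C' R * (1 / norm \<omega>^3)) summable_on L - {0}"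
      by (rule summable_on_cmult_right[OF lat_summable3])
  qed
qed

definition Ps where "Ps z = (\<Sum>\<^sub>\<infinity>\<omega>\<in>L-{0}. 1/(z-\<omega>)^2 - 1/\<omega>^2)"
definition Zs where "Zs z = (\<Sum>\<^sub>\<infinity>\<omega>\<in>L-{0}. 1/(z-\<omega>) + 1/\<omega> + z/\<omega>^2)"
definition Ps1 where "Ps1 z = (\<Sum>\<^sub>\<infinity>\<omega>\<in>L-{0}. -2/(z-\<omega>)^3)"
definition Pd where "Pd z = -2/z^3 + Ps1 z"

lemma wp_eq: "wp w1 w2 z = 1/z^2 + Ps z" by (simp add: wp_def Ps_def)
lemma wzeta_eq: "wzeta w1 w2 z = 1/z + Zs z" by (simp add: wzeta_def Zs_def)

lemma Ps_summ: "(\<lambda>\<omega>. 1/(z-\<omega>)^2 - 1/\<omega>^2) summable_on (L-{0})"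
  by (rule lat_summ[of z _ "\<lambda>R. 10*R"]) (rule term_bounds(1))
lemma Ps1_summ: "(\<lambda>\<omega>. -2/(z-\<omega>)^3) summable_on (L-{0})"
  by (rule lat_summ[of z _ "\<lambda>R. 16"]) (rule term_bounds(2))
lemma Zs_summ: "(\<lambda>\<omega>. 1/(z-\<omega>) + 1/\<omega> + z/\<omega>^2) summable_on (L-{0})"
  by (rule lat_summ[of z _ "\<lambda>R. 2*R^2"]) (rule term_bounds(3))

lemma Ps_deriv: "z \<notin> L - {0} \<Longrightarrow> (Ps has_field_derivative Ps1 z) (at z)"
  unfolding Ps_def[abs_def] Ps1_def
  by (rule lat_deriv[where C="\<lambda>R. 10*R" and C'="\<lambda>R. 16", OF d1 term_bounds(1) term_bounds(2)])
     auto

lemma Zs_deriv: "z \<notin> L - {0} \<Longrightarrow> (Zs has_field_derivative - Ps z) (at z)"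
proof -
  assume z: "z \<notin> L - {0}"
  have "(Zs has_field_derivative (\<Sum>\<^sub>\<infinity>\<omega>\<in>L-{0}. -1/(z-\<omega>)^2 + 1/\<omega>^2)) (at z)"
    unfolding Zs_def[abs_def]
    by (rule lat_deriv[where C="\<lambda>R. 2*R^2" and C'="\<lambda>R. 10*R", OF d2 term_bounds(3) term_bounds(4) z])
       auto
  moreover have "(\<Sum>\<^sub>\<infinity>\<omega>\<in>L-{0}. -1/(z-\<omega>)^2 + 1/\<omega>^2) = - Ps z"
    unfolding Ps_def by (subst infsum_uminus[symmetric]) (rule infsum_cong, simp)
  ultimately show ?thesis by simp
qed

lemma wp_deriv: "z \<notin> L \<Longrightarrow> (wp w1 w2 has_field_derivative Pd z) (at z)"
proof -
  assume z: "z \<notin> L"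
  then have "z \<noteq> 0" by auto
  have "((\<lambda>z. 1/z^2 + Ps z) has_field_derivative -2/z^3 + Ps1 z) (at z)"
    by (intro derivative_intros d0 Ps_deriv) (use z \<open>z \<noteq> 0\<close> in auto)
  then show ?thesis by (simp add: wp_eq[abs_def] Pd_def)
qed

lemma wzeta_deriv: "z \<notin> L \<Longrightarrow> (wzeta w1 w2 has_field_derivative - wp w1 w2 z) (at z)"
proof -
  assume z: "z \<notin> L"
  then have "z \<noteq> 0" by auto
  have "((\<lambda>z. 1/z + Zs z) has_field_derivative -1/z^2 + - Ps z) (at z)"
    by (intro derivative_intros d0' Zs_deriv) (use z \<open>z \<noteq> 0\<close> in auto)
  then show ?thesis by (simp add: wzeta_eq[abs_def] wp_eq)
qed

end

context wlat begin

lemma L0_uminus_witness: "infsum g (L-{0}) = infsum h (L-{0})" if "\<And>a. a \<in> L-{0} \<Longrightarrow> h (-a) = g a"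
  for g h :: "complex \<Rightarrow> complex"
  by (rule infsum_reindex_bij_witness[of _ uminus uminus]) (use that in auto)

lemma Ps_even: "Ps (-z) = Ps z"
  unfolding Ps_def by (rule L0_uminus_witness) (simp add: power2_eq_square algebra_simps)

lemma Zs_odd: "Zs (-z) = - Zs z"
proof -
  have "Zs (-z) = (\<Sum>\<^sub>\<infinity>\<omega>\<in>L-{0}. - (1/(z-\<omega>) + 1/\<omega> + z/\<omega>^2))"
    unfolding Zs_def
  proof (rule L0_uminus_witness)
    fix a assume "a \<in> L - {0}"
    have "-z-a = - (z+a)" by simp
    then have "1/(-z-a) = - (1/(z+a))" by (simp only: divide_minus_right)
    then show "- (1/(z - -a) + 1/(-a) + z/(-a)^2) = 1/(-z-a) + 1/a + -z/a^2" by simp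
  qed
  also have "\<dots> = - Zs z" unfolding Zs_def by (rule infsum_uminus)
  finally show ?thesis .
qed

lemma Ps1_odd: "Ps1 (-z) = - Ps1 z"
proof -
  have "Ps1 (-z) = (\<Sum>\<^sub>\<infinity>\<omega>\<in>L-{0}. - (-2/(z-\<omega>)^3))"
    unfolding Ps1_def
  proof (rule L0_uminus_witness)
    fix a assume "a \<in> L - {0}"
    have "(-z-a)^3 = - ((z+a)^3)" by (simp add: power3_eq_cube algebra_simps)
    then show "- (-2/(z - -a)^3) = -2/(-z-a)^3" by simp
  qed
  also have "\<dots> = - Ps1 z" unfolding Ps1_def by (rule infsum_uminus)
  finally show ?thesis .
qed

lemma wp_even: "wp w1 w2 (-z) = wp w1 w2 z" by (simp add: wp_eq Ps_even)
lemma wzeta_odd: "wzeta w1 w2 (-z) = - wzeta w1 w2 z" by (simp add: wzeta_eq Zs_odd)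
lemma Pd_odd: "Pd (-z) = - Pd z" by (simp add: Pd_def Ps1_odd)

lemma Pd_L: "Pd z = (\<Sum>\<^sub>\<infinity>\<omega>\<in>L. -2/(z-\<omega>)^3)"
proof -
  have "L = insert 0 (L - {0})" by auto
  then have "(\<Sum>\<^sub>\<infinity>\<omega>\<in>L. -2/(z-\<omega>)^3) = (\<Sum>\<^sub>\<infinity>\<omega>\<in>insert 0 (L-{0}). -2/(z-\<omega>)^3)" by simp
  also have "\<dots> = -2/(z-0)^3 + Ps1 z" unfolding Ps1_def by (rule infsum_insert[OF Ps1_summ]) simp
  finally show ?thesis by (simp add: Pd_def)
qed

lemma Pd_periodic: "a \<in> L \<Longrightarrow> Pd (z + a) = Pd z"
  unfolding Pd_L
  by (rule infsum_reindex_bij_witness[of _ "\<lambda>\<omega>. \<omega> + a" "\<lambda>\<omega>. \<omega> - a"])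
     (simp_all add: lat_add lat_diff algebra_simps)

lemma compl_open: "open (- L)" using lat_closed by auto
lemma compl_connected: "connected (- L)"
  using path_connected_complement_countable[OF _ lat_countable] by (simp add: path_connected_imp_connected)

lemma const_on_compl:
  assumes "\<And>z. z \<notin> L \<Longrightarrow> (D has_field_derivative 0) (at z)"
  shows "\<exists>c. \<forall>z. z \<notin> L \<longrightarrow> D z = c"
proof -
  have cont: "continuous_on (- L) D"
    using assms by (intro continuous_at_imp_continuous_on) (auto intro: DERIV_continuous)
  obtain c where "\<And>x. x \<in> - L \<Longrightarrow> D x = c"
    using DERIV_zero_connected_constant[OF compl_connected compl_open finite.emptyI cont] assms by auto
  then show ?thesis by auto
qed

lemma wp_periodic:
  assumes a: "a \<in> L" and z: "z \<notin> L"
  shows "wp w1 w2 (z + a) = wp w1 w2 z"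
proof -
  have "\<exists>c. \<forall>z. z \<notin> L \<longrightarrow> wp w1 w2 (z + a) - wp w1 w2 z = c"
  proof (rule const_on_compl)
    fix z assume z: "z \<notin> L"
    have za: "z + a \<notin> L" using lat_shift[OF a] z by simp
    have "((\<lambda>z. wp w1 w2 (z + a) - wp w1 w2 z) has_field_derivative Pd (z + a) * 1 - Pd z) (at z)"
      by (intro derivative_intros DERIV_chain2[where g="\<lambda>z. z + a" and x=z, OF wp_deriv[OF za]] wp_deriv[OF z])
         (auto intro!: derivative_eq_intros)
    then show "((\<lambda>z. wp w1 w2 (z + a) - wp w1 w2 z) has_field_derivative 0) (at z)"
      by (simp add: Pd_periodic[OF a])
  qed
  then obtain c where c: "\<And>z. z \<notin> L \<Longrightarrow> wp w1 w2 (z + a) - wp w1 w2 z = c" by blast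
  have z': "-z - a \<notin> L" using z lat_shift'[OF a, of "-z"] by simp
  have "c = wp w1 w2 (-z - a + a) - wp w1 w2 (-z - a)" using c[OF z'] by simp
  also have "\<dots> = wp w1 w2 z - wp w1 w2 (z + a)"
  proof -
    have "-z - a = - (z + a)" by simp
    then have "wp w1 w2 (-z - a) = wp w1 w2 (z + a)" using wp_even[of "z + a"] by simp
    then show ?thesis using wp_even[of z] by simp
  qed
  finally have "c = - c" using c[OF z] by simp
  then have "c = 0" by simp
  then show ?thesis using c[OF z] by simp
qed

lemma wzeta_quasi:
  assumes a: "a \<in> L"
  shows "\<exists>\<eta>. \<forall>z. z \<notin> L \<longrightarrow> wzeta w1 w2 (z + a) = wzeta w1 w2 z + \<eta>"
proof -
  have "\<exists>c. \<forall>z. z \<notin> L \<longrightarrow> wzeta w1 w2 (z + a) - wzeta w1 w2 z = c"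
  proof (rule const_on_compl)
    fix z assume z: "z \<notin> L"
    have za: "z + a \<notin> L" using lat_shift[OF a] z by simp
    have "((\<lambda>z. wzeta w1 w2 (z + a) - wzeta w1 w2 z) has_field_derivative
            - wp w1 w2 (z + a) * 1 - - wp w1 w2 z) (at z)"
      by (intro derivative_intros DERIV_chain2[where g="\<lambda>z. z + a" and x=z, OF wzeta_deriv[OF za]] wzeta_deriv[OF z])
         (auto intro!: derivative_eq_intros)
    then show "((\<lambda>z. wzeta w1 w2 (z + a) - wzeta w1 w2 z) has_field_derivative 0) (at z)"
      by (simp add: wp_periodic[OF a z])
  qed
  then obtain c where c: "\<forall>z. z \<notin> L \<longrightarrow> wzeta w1 w2 (z + a) - wzeta w1 w2 z = c" by blast
  show ?thesis by (rule exI[of _ c]) (use c in \<open>auto simp: algebra_simps\<close>)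
qed

end

definition lb :: "(complex \<Rightarrow> complex) \<Rightarrow> complex \<Rightarrow> bool" where
  "lb f p \<longleftrightarrow> (\<exists>B. \<forall>\<^sub>F y in at p. norm (f y) \<le> B)"

lemma ev_neq: "\<forall>\<^sub>F y in at p. y \<noteq> p"
  using eventually_at_in_open[OF open_UNIV UNIV_I, of p] by (rule eventually_mono) auto

lemma lb_tendsto: "(f \<longlongrightarrow> l) (at p) \<Longrightarrow> lb f p"
proof -
  assume "(f \<longlongrightarrow> l) (at p)"
  then have "\<forall>\<^sub>F y in at p. norm (f y) < norm l + 1"
    using order_tendstoD(2)[OF tendsto_norm] by fastforce
  then show ?thesis unfolding lb_def by (intro exI[of _ "norm l + 1"]) (auto elim: eventually_mono)
qed

lemma lb_cont: "isCont f p \<Longrightarrow> lb f p"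
  by (rule lb_tendsto) (simp add: isCont_def)

lemma lb_const: "lb (\<lambda>y. c) p" unfolding lb_def by (intro exI[of _ "norm c"]) simp

lemma lb_cong: "lb f p \<Longrightarrow> \<forall>\<^sub>F y in at p. f y = g y \<Longrightarrow> lb g p"
  unfolding lb_def
proof (elim exE)
  fix B assume "\<forall>\<^sub>F y in at p. norm (f y) \<le> B" "\<forall>\<^sub>F y in at p. f y = g y"
  then have "\<forall>\<^sub>F y in at p. norm (g y) \<le> B" by eventually_elim simp
  then show "\<exists>B. \<forall>\<^sub>F y in at p. norm (g y) \<le> B" by blast
qed

lemma lb_add: "lb f p \<Longrightarrow> lb g p \<Longrightarrow> lb (\<lambda>y. f y + g y) p"
  unfolding lb_def
proof (elim exE)
  fix B1 B2 assume "\<forall>\<^sub>F y in at p. norm (f y) \<le> B1" "\<forall>\<^sub>F y in at p. norm (g y) \<le> B2"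
  then have "\<forall>\<^sub>F y in at p. norm (f y + g y) \<le> B1 + B2"
    by eventually_elim (rule order_trans[OF norm_triangle_ineq], simp)
  then show "\<exists>B. \<forall>\<^sub>F y in at p. norm (f y + g y) \<le> B" by blast
qed

lemma lb_mult: "lb f p \<Longrightarrow> lb g p \<Longrightarrow> lb (\<lambda>y. f y * g y) p"
  unfolding lb_def
proof (elim exE)
  fix B1 B2 assume "\<forall>\<^sub>F y in at p. norm (f y) \<le> B1" "\<forall>\<^sub>F y in at p. norm (g y) \<le> B2"
  then have "\<forall>\<^sub>F y in at p. norm (f y * g y) \<le> B1 * B2"
    by eventually_elim (simp add: norm_mult mult_mono' order_trans[OF _ norm_ge_zero] mult_mono)
  then show "\<exists>B. \<forall>\<^sub>F y in at p. norm (f y * g y) \<le> B" by blast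
qed

lemma lb_diff: "lb f p \<Longrightarrow> lb g p \<Longrightarrow> lb (\<lambda>y. f y - g y) p"
  using lb_add[of f p "\<lambda>y. (-1) * g y"] lb_mult[OF lb_const[of "-1"], of g p] by simp

lemma lb_div_id:
  assumes h: "h holomorphic_on ball 0 r" and r: "r > 0" and h0: "h 0 = 0"
  shows "lb (\<lambda>y. h y / y) 0"
proof -
  define g where "g = (\<lambda>z. if z = 0 then deriv h 0 else (h z - h 0) / (z - 0))"
  have "g holomorphic_on ball 0 r" unfolding g_def by (rule pole_lemma[OF h]) (simp add: r)
  then have "isCont g 0"
    using r by (meson centre_in_ball holomorphic_on_imp_continuous_on open_ball continuous_on_eq_continuous_at)
  then have "lb g 0" by (rule lb_cont)
  moreover have "\<forall>\<^sub>F y in at 0. g y = h y / y"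
    using ev_neq[of 0] by (rule eventually_mono) (simp add: g_def h0)
  ultimately show ?thesis by (rule lb_cong)
qed

lemma lb_div_sq:
  assumes h: "h holomorphic_on ball 0 r" and r: "r > 0" and h0: "h 0 = 0" and h1: "deriv h 0 = 0"
  shows "lb (\<lambda>y. h y / y^2) 0"
proof -
  define g where "g = (\<lambda>z. if z = 0 then deriv h 0 else (h z - h 0) / (z - 0))"
  have gh: "g holomorphic_on ball 0 r" unfolding g_def by (rule pole_lemma[OF h]) (simp add: r)
  have g0: "g 0 = 0" by (simp add: g_def h1)
  have "lb (\<lambda>y. g y / y) 0" by (rule lb_div_id[OF gh r g0])
  moreover have "\<forall>\<^sub>F y in at 0. g y / y = h y / y^2"
    using ev_neq[of 0] by (rule eventually_mono) (simp add: g_def h0 power2_eq_square)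
  ultimately show ?thesis by (rule lb_cong)
qed

context wlat begin

lemma Ps_holo: "Ps holomorphic_on (- (L - {0}))"
  by (subst holomorphic_on_open[OF open_Compl[OF lat0_closed]]) (use Ps_deriv in blast)

lemma Zs_holo: "Zs holomorphic_on (- (L - {0}))"
  by (subst holomorphic_on_open[OF open_Compl[OF lat0_closed]]) (use Zs_deriv in blast)

lemma Ps1_holo: "Ps1 holomorphic_on (- (L - {0}))"
proof -
  have "(deriv Ps) holomorphic_on (- (L - {0}))"
    by (rule holomorphic_deriv[OF Ps_holo open_Compl[OF lat0_closed]])
  then show ?thesis by (rule holomorphic_transform) (use Ps_deriv DERIV_imp_deriv in auto)
qed

lemma Pd_holo: "Pd holomorphic_on (- L)"
proof -
  have "(\<lambda>z. -2/z^3 + Ps1 z) holomorphic_on (- L)"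
    by (intro holomorphic_intros holomorphic_on_subset[OF Ps1_holo]) auto
  then show ?thesis by (simp add: Pd_def[abs_def])
qed

lemma cont_at_open: "f holomorphic_on S \<Longrightarrow> open S \<Longrightarrow> p \<in> S \<Longrightarrow> isCont f p"
  by (meson holomorphic_on_imp_continuous_on continuous_on_eq_continuous_at)

lemma Pd_cont: "p \<notin> L \<Longrightarrow> isCont Pd p"
  by (rule cont_at_open[OF Pd_holo open_Compl[OF lat_closed]]) blast
lemma Ps_cont: "p \<notin> L - {0} \<Longrightarrow> isCont Ps p"
  by (rule cont_at_open[OF Ps_holo open_Compl[OF lat0_closed]]) blast
lemma Zs_cont: "p \<notin> L - {0} \<Longrightarrow> isCont Zs p"
  by (rule cont_at_open[OF Zs_holo open_Compl[OF lat0_closed]]) blast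
lemma Ps1_cont: "p \<notin> L - {0} \<Longrightarrow> isCont Ps1 p"
  by (rule cont_at_open[OF Ps1_holo open_Compl[OF lat0_closed]]) blast
lemma wzeta_cont: "p \<notin> L \<Longrightarrow> isCont (wzeta w1 w2) p"
  using wzeta_deriv DERIV_isCont by blast
lemma wp_cont: "p \<notin> L \<Longrightarrow> isCont (wp w1 w2) p"
  using wp_deriv DERIV_isCont by blast

lemma Ps_0: "Ps 0 = 0"
  unfolding Ps_def by (rule infsum_0) (simp add: power2_eq_square)
lemma Zs_0: "Zs 0 = 0"
  unfolding Zs_def by (rule infsum_0) simp

lemma ev_notL: "\<forall>\<^sub>F y in at p. y \<notin> L"
proof -
  define T where "T = {\<omega>\<in>L. norm \<omega> \<le> norm p + 1}"
  have "finite T" unfolding T_def by (rule lat_finite)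
  then obtain d where d: "d > 0" "\<And>\<omega>. \<omega> \<in> T \<Longrightarrow> \<omega> \<noteq> p \<Longrightarrow> d \<le> dist p \<omega>"
    using finite_set_avoid[of T p] by blast
  show ?thesis unfolding eventually_at
  proof (intro exI[of _ "min d 1"] conjI ballI impI)
    show "0 < min d 1" using d by simp
    fix y assume y: "y \<in> UNIV" "y \<noteq> p \<and> dist y p < min d 1"
    show "y \<notin> L"
    proof
      assume yL: "y \<in> L"
      have "norm y \<le> norm p + 1"
        using y norm_triangle_ineq2[of y p] by (simp add: dist_norm)
      then have "y \<in> T" using yL by (simp add: T_def)
      then have "d \<le> dist p y" using d y by auto
      then show False using y by (simp add: dist_commute)
    qed
  qed
qed

lemma lbZ: "lb (\<lambda>y. wzeta w1 w2 (y + c) * (y - p)) p"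
proof (cases "p + c \<in> L")
  case False
  have "isCont (\<lambda>y. wzeta w1 w2 (y + c) * (y - p)) p"
    by (intro continuous_intros isCont_o2[OF _ wzeta_cont]) (use False in auto)
  then show ?thesis by (rule lb_cont)
next
  case True
  obtain \<eta> where \<eta>: "\<And>z. z \<notin> L \<Longrightarrow> wzeta w1 w2 (z + (p + c)) = wzeta w1 w2 z + \<eta>"
    using wzeta_quasi[OF True] by blast
  have "isCont (\<lambda>y. 1 + (Zs (y - p) + \<eta>) * (y - p)) p"
    by (intro continuous_intros isCont_o2[OF _ Zs_cont]) auto
  then have "lb (\<lambda>y. 1 + (Zs (y - p) + \<eta>) * (y - p)) p" by (rule lb_cont)
  moreover have "\<forall>\<^sub>F y in at p. 1 + (Zs (y - p) + \<eta>) * (y - p) = wzeta w1 w2 (y + c) * (y - p)"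
  proof -
    have "\<forall>\<^sub>F y in at p. y - p \<notin> L"
      using ev_notL[of 0] unfolding eventually_at_to_0[of _ p] by simp
    then show ?thesis using ev_neq[of p]
    proof eventually_elim
      case (elim y)
      have "wzeta w1 w2 (y + c) = wzeta w1 w2 ((y - p) + (p + c))" by simp
      also have "\<dots> = 1 / (y - p) + Zs (y - p) + \<eta>" using \<eta>[OF elim(1)] by (simp add: wzeta_eq)
      finally show ?case using elim(2) by (simp add: field_simps)
    qed
  qed
  ultimately show ?thesis by (rule lb_cong)
qed

end

locale wadd = wlat +
  fixes x :: complex
  assumes x: "x \<notin> L"
begin

abbreviation "Z \<equiv> wzeta w1 w2"
abbreviation "P \<equiv> wp w1 w2"

definition S where "S = {y. y \<in> L \<or> y + x \<in> L \<or> y - x \<in> L}"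
definition F where "F y = (Z (y + x) + Z (y - x) - 2 * Z y) * (P y - P x) - Pd y"

lemma S_closed: "closed S"
proof -
  have "S = L \<union> ((\<lambda>y. y + x) -` L) \<union> ((\<lambda>y. y - x) -` L)" by (auto simp: S_def)
  moreover have "closed ((\<lambda>y. y + x) -` L)" "closed ((\<lambda>y. y - x) -` L)"
    by (intro continuous_closed_vimage lat_closed continuous_intros)+
  ultimately show ?thesis using lat_closed by auto
qed

lemma open_nS: "open (- S)" using S_closed by auto

lemma ev_shift: "(\<forall>\<^sub>F y in at (p + c). Q y) \<Longrightarrow> (\<forall>\<^sub>F y in at p. Q (y + c))" for p c :: complex
  using eventually_at_to_0[of Q "p+c"] eventually_at_to_0[of "\<lambda>y. Q (y + c)" p] by (simp add: add.assoc)

lemma ev_notS: "\<forall>\<^sub>F y in at p. y \<notin> S"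
proof -
  have 1: "\<forall>\<^sub>F y in at p. y + x \<notin> L" by (rule ev_shift) (rule ev_notL)
  have 2: "\<forall>\<^sub>F y in at p. y + (-x) \<notin> L" by (rule ev_shift) (rule ev_notL)
  show ?thesis using ev_notL[of p] 1 2 by eventually_elim (simp add: S_def)
qed

lemma notS: "y \<notin> S \<longleftrightarrow> y \<notin> L \<and> y + x \<notin> L \<and> y - x \<notin> L" by (simp add: S_def)

lemma F_holo: "F holomorphic_on (- S)"
proof -
  have Zh: "Z holomorphic_on (- L)"
    by (subst holomorphic_on_open[OF open_Compl[OF lat_closed]]) (use wzeta_deriv in blast)
  have Ph: "P holomorphic_on (- L)"
    by (subst holomorphic_on_open[OF open_Compl[OF lat_closed]]) (use wp_deriv in blast)
  have 1: "(\<lambda>y. Z (y + x)) holomorphic_on (- S)"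
    by (rule holomorphic_on_compose_gen[of "\<lambda>y. y + x" _ Z "- L", unfolded o_def])
       (auto intro: holomorphic_intros Zh simp: S_def)
  have 2: "(\<lambda>y. Z (y - x)) holomorphic_on (- S)"
    by (rule holomorphic_on_compose_gen[of "\<lambda>y. y - x" _ Z "- L", unfolded o_def])
       (auto intro: holomorphic_intros Zh simp: S_def)
  have 3: "Z holomorphic_on (- S)" by (rule holomorphic_on_subset[OF Zh]) (auto simp: S_def)
  have 4: "P holomorphic_on (- S)" by (rule holomorphic_on_subset[OF Ph]) (auto simp: S_def)
  have 5: "Pd holomorphic_on (- S)" by (rule holomorphic_on_subset[OF Pd_holo]) (auto simp: S_def)
  show ?thesis unfolding F_def[abs_def] by (intro holomorphic_intros 1 2 3 4 5)
qed

lemma F_cont: "y \<notin> S \<Longrightarrow> isCont F y"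
  by (rule cont_at_open[OF F_holo open_nS]) simp

lemma S_shift: "a \<in> L \<Longrightarrow> y + a \<notin> S \<longleftrightarrow> y \<notin> S"
proof -
  assume a: "a \<in> L"
  have e: "y + a + x = (y + x) + a" "y + a - x = (y - x) + a" by (simp_all add: algebra_simps)
  show ?thesis unfolding notS e lat_shift[OF a] by simp
qed

lemma F_per:
  assumes a: "a \<in> L" and y: "y \<notin> S"
  shows "F (y + a) = F y"
proof -
  obtain \<eta> where \<eta>: "\<And>z. z \<notin> L \<Longrightarrow> Z (z + a) = Z z + \<eta>" using wzeta_quasi[OF a] by blast
  have y': "y \<notin> L" "y + x \<notin> L" "y - x \<notin> L" using y by (auto simp: notS)
  have "Z (y + a + x) = Z (y + x) + \<eta>" using \<eta>[OF y'(2)] by (simp add: algebra_simps)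
  moreover have "Z (y + a - x) = Z (y - x) + \<eta>" using \<eta>[OF y'(3)] by (simp add: algebra_simps)
  moreover have "Z (y + a) = Z y + \<eta>" using \<eta>[OF y'(1)] .
  moreover have "P (y + a) = P y" using wp_periodic[OF a y'(1)] .
  moreover have "Pd (y + a) = Pd y" using Pd_periodic[OF a] .
  ultimately show ?thesis by (simp add: F_def algebra_simps)
qed

lemma F_odd:
  assumes y: "y \<notin> S"
  shows "- y \<notin> S" "F (- y) = - F y"
proof -
  have y': "y \<notin> L" "y + x \<notin> L" "y - x \<notin> L" using y by (auto simp: notS)
  have e1: "-y + x = - (y - x)" and e2: "-y - x = - (y + x)" by simp_all
  show "- y \<notin> S" using y' unfolding notS e1 e2 lat_uminus_iff by simp
  show "F (- y) = - F y"
    unfolding F_def e1 e2 wzeta_odd wp_even Pd_odd by (simp add: algebra_simps)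
qed

lemma wp_Sx: "p \<in> S \<Longrightarrow> p \<notin> L \<Longrightarrow> P p = P x"
proof -
  assume p: "p \<in> S" "p \<notin> L"
  have mx: "-x \<notin> L" using x by simp
  show ?thesis
  proof (cases "p + x \<in> L")
    case True
    have "P p = P (-x + (p + x))" by simp
    also have "\<dots> = P (-x)" by (rule wp_periodic[OF True mx])
    finally show ?thesis by (simp add: wp_even)
  next
    case False
    then have "p - x \<in> L" using p by (auto simp: S_def)
    have "P p = P (x + (p - x))" by simp
    also have "\<dots> = P x" by (rule wp_periodic[OF \<open>p - x \<in> L\<close> x])
    finally show ?thesis .
  qed
qed

lemma lb_F_S:
  assumes p: "p \<in> S" "p \<notin> L"
  shows "lb F p"
proof -
  define q where "q y = (P y - P p) / (y - p)" for y
  have "(q \<longlongrightarrow> Pd p) (at p)"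
    using wp_deriv[OF p(2)] unfolding has_field_derivative_iff q_def by simp
  then have lq: "lb q p" by (rule lb_tendsto)
  have l1: "lb (\<lambda>y. Z (y + x) * (y - p)) p" by (rule lbZ)
  have l2: "lb (\<lambda>y. Z (y + -x) * (y - p)) p" by (rule lbZ)
  have l3: "lb (\<lambda>y. Z (y + 0) * (y - p)) p" by (rule lbZ)
  have "lb (\<lambda>y. (Z (y + x) * (y - p) + Z (y + -x) * (y - p) - 2 * (Z (y + 0) * (y - p))) * q y - Pd y) p"
    by (intro lb_diff lb_mult lb_add l1 l2 l3 lq lb_const lb_cont Pd_cont p(2))
  moreover have "\<forall>\<^sub>F y in at p.
      (Z (y + x) * (y - p) + Z (y + -x) * (y - p) - 2 * (Z (y + 0) * (y - p))) * q y - Pd y = F y"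
    using ev_neq[of p]
  proof eventually_elim
    case (elim y)
    then show ?case using wp_Sx[OF p] by (simp add: F_def q_def field_simps)
  qed
  ultimately show ?thesis by (rule lb_cong)
qed


lemma lb_F_0: "lb F 0"
proof -
  obtain r1 where r1: "r1 > 0" "ball x r1 \<subseteq> - L"
    using open_Compl[OF lat_closed] x by (meson Compl_iff open_contains_ball)
  obtain r2 where r2: "r2 > 0" "ball (-x) r2 \<subseteq> - L"
    using open_Compl[OF lat_closed] x by (metis Compl_iff lat_uminus_iff open_contains_ball)
  define r where "r = min (min r1 r2) cL"
  have r: "r > 0" using r1 r2 cL_pos by (simp add: r_def)
  have inb: "y + x \<notin> L" "y - x \<notin> L" "y \<notin> L - {0}" if "y \<in> ball 0 r" for y
  proof -
    have "y + x \<in> ball x r1" using that by (simp add: r_def dist_norm)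
    then show "y + x \<notin> L" using r1 by auto
    have "y - x \<in> ball (-x) r2" using that by (simp add: r_def dist_norm)
    then show "y - x \<notin> L" using r2 by auto
    show "y \<notin> L - {0}" using that lat_norm_ge[of y] by (force simp: r_def)
  qed
  define H where "H y = Z (y + x) + Z (y - x)" for y
  have Hd: "(H has_field_derivative (- P (y + x) - P (y - x))) (at y)" if "y \<in> ball 0 r" for y
  proof -
    have "((\<lambda>y. Z (y + x) + Z (y - x)) has_field_derivative (- P (y + x) * 1 + - P (y - x) * 1)) (at y)"
      by (intro derivative_intros DERIV_chain2[where g="\<lambda>y. y + x" and x=y, OF wzeta_deriv]
            DERIV_chain2[where g="\<lambda>y. y - x" and x=y, OF wzeta_deriv])
         (use inb[OF that] in \<open>auto intro!: derivative_eq_intros\<close>)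
    then show ?thesis by (simp add: H_def[abs_def])
  qed
  have Hh: "H holomorphic_on ball 0 r"
    by (subst holomorphic_on_open[OF open_ball]) (use Hd in blast)
  define k where "k y = H y + 2 * P x * y" for y
  have kh: "k holomorphic_on ball 0 r" unfolding k_def[abs_def] by (intro holomorphic_intros Hh)
  have k0: "k 0 = 0" by (simp add: k_def H_def wzeta_odd[of x])
  have "(k has_field_derivative (- P (0 + x) - P (0 - x)) + 2 * P x * 1) (at 0)"
    unfolding k_def[abs_def] by (intro derivative_intros Hd) (use r in auto)
  then have k1: "deriv k 0 = 0" by (simp add: DERIV_imp_deriv wp_even[of x])
  have Psh: "Ps holomorphic_on ball 0 r" by (rule holomorphic_on_subset[OF Ps_holo]) (use inb in auto)
  have Zsh: "Zs holomorphic_on ball 0 r" by (rule holomorphic_on_subset[OF Zs_holo]) (use inb in auto)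
  have Zs1: "deriv Zs 0 = 0" using Zs_deriv[of 0] by (simp add: DERIV_imp_deriv Ps_0)
  have lH: "lb H 0"
    by (rule lb_cont) (use Hd[of 0] r in \<open>auto intro: DERIV_isCont\<close>)
  have lPs: "lb Ps 0" by (rule lb_cont[OF Ps_cont]) simp
  have lZs: "lb Zs 0" by (rule lb_cont[OF Zs_cont]) simp
  have lPs1: "lb Ps1 0" by (rule lb_cont[OF Ps1_cont]) simp
  have "lb (\<lambda>y. k y / y^2 + H y * (Ps y - P x) - 2 * (Ps y / y) - 2 * (Zs y / y^2)
              - 2 * Zs y * (Ps y - P x) - Ps1 y) 0"
    by (intro lb_add lb_diff lb_mult lb_const lH lPs lZs lPs1 lb_div_sq[OF kh r k0 k1]
          lb_div_id[OF Psh r Ps_0] lb_div_sq[OF Zsh r Zs_0 Zs1])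
  moreover have "\<forall>\<^sub>F y in at 0. k y / y^2 + H y * (Ps y - P x) - 2 * (Ps y / y) - 2 * (Zs y / y^2)
              - 2 * Zs y * (Ps y - P x) - Ps1 y = F y"
    using ev_neq[of 0]
  proof eventually_elim
    case (elim y)
    have "F y = (H y - 2 * (1/y + Zs y)) * (1/y^2 + Ps y - P x) - (-2/y^3 + Ps1 y)"
      by (simp add: F_def H_def wzeta_eq[of y] wp_eq[of y] Pd_def algebra_simps)
    also have "\<dots> = k y / y^2 + H y * (Ps y - P x) - 2 * (Ps y / y) - 2 * (Zs y / y^2)
              - 2 * Zs y * (Ps y - P x) - Ps1 y"
      using elim by (simp add: k_def field_simps power2_eq_square power3_eq_cube)
    finally show ?case by simp
  qed
  ultimately show ?thesis by (rule lb_cong)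
qed

lemma lb_F: "lb F p"
proof (cases "p \<in> S")
  case False
  then show ?thesis by (intro lb_cont F_cont)
next
  case True
  show ?thesis
  proof (cases "p \<in> L")
    case False
    then show ?thesis using True lb_F_S by blast
  next
    case pL: True
    obtain B where B: "\<forall>\<^sub>F u in at 0. norm (F u) \<le> B" using lb_F_0 unfolding lb_def by blast
    have "\<forall>\<^sub>F y in at p. norm (F (y - p)) \<le> B"
      using B eventually_at_to_0[of "\<lambda>y. norm (F (y - p)) \<le> B" p] by simp
    moreover have "\<forall>\<^sub>F y in at p. F (y - p) = F y"
      using ev_notS[of p]
    proof eventually_elim
      case (elim y)
      then have "y - p \<notin> S" using S_shift[OF lat_uminus[OF pL], of y] by simp
      then show ?case using F_per[OF pL, of "y - p"] by simp
    qed
    ultimately have "\<forall>\<^sub>F y in at p. norm (F y) \<le> B" by eventually_elim simp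
    then show ?thesis unfolding lb_def by blast
  qed
qed


lemma F_local_bound: "\<exists>r>0. \<exists>B. \<forall>y\<in>ball p r. y \<notin> S \<longrightarrow> norm (F y) \<le> B"
proof -
  obtain B0 where "\<forall>\<^sub>F y in at p. norm (F y) \<le> B0" using lb_F[of p] unfolding lb_def by blast
  then obtain d where d: "d > 0" "\<And>y. y \<noteq> p \<Longrightarrow> dist y p < d \<Longrightarrow> norm (F y) \<le> B0"
    unfolding eventually_at by auto
  show ?thesis
  proof (intro exI conjI ballI impI)
    show "d > 0" by fact
    fix y assume "y \<in> ball p d" "y \<notin> S"
    then show "norm (F y) \<le> max B0 (norm (F p))"
      using d(2)[of y] by (cases "y = p") (auto simp: dist_commute)
  qed
qed

definition P0 where "P0 = (\<lambda>(s,t). of_real s * w1 + of_real t * w2) ` ({0..1::real} \<times> {0..1::real})"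

lemma P0_compact: "compact P0"
  unfolding P0_def
  by (intro compact_continuous_image compact_Times compact_Icc)
     (auto intro!: continuous_intros simp: case_prod_beta)

lemma decomp: "\<exists>a\<in>L. y - a \<in> P0"
proof -
  define \<tau> where "\<tau> = w2 / w1"
  define u where "u = y / w1"
  define t where "t = Im u / Im \<tau>"
  define s where "s = Re u - t * Re \<tau>"
  have Imt: "Im \<tau> \<noteq> 0" using nondeg by (simp add: \<tau>_def)
  have "of_real s + of_real t * \<tau> = u"
    using Imt by (intro complex_eqI) (simp_all add: s_def t_def)
  then have y: "y = of_real s * w1 + of_real t * w2"
    using w1_nz by (simp add: u_def \<tau>_def field_simps)
  define a where "a = of_int \<lfloor>s\<rfloor> * w1 + of_int \<lfloor>t\<rfloor> * w2"
  have aL: "a \<in> L" unfolding a_def lattice_iff by blast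
  have "y - a = of_real (frac s) * w1 + of_real (frac t) * w2"
    by (simp add: y a_def frac_def algebra_simps)
  moreover have "frac s \<in> {0..1}" "frac t \<in> {0..1}" using frac_lt_1 by (auto intro: less_imp_le)
  ultimately have "y - a \<in> P0" unfolding P0_def by (auto intro!: image_eqI[of _ _ "(frac s, frac t)"])
  then show ?thesis using aL by blast
qed

lemma F_bounded: "\<exists>B. \<forall>y. y \<notin> S \<longrightarrow> norm (F y) \<le> B"
proof -
  have "\<forall>p. \<exists>q. fst q > 0 \<and> (\<forall>y\<in>ball p (fst q). y \<notin> S \<longrightarrow> norm (F y) \<le> snd q)"
  proof
    fix p
    obtain r B where "r > 0" "\<forall>y\<in>ball p r. y \<notin> S \<longrightarrow> norm (F y) \<le> B"
      using F_local_bound[of p] by blast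
    then show "\<exists>q. fst q > 0 \<and> (\<forall>y\<in>ball p (fst q). y \<notin> S \<longrightarrow> norm (F y) \<le> snd q)"
      by (intro exI[of _ "(r, B)"]) simp
  qed
  then obtain Q where Q: "\<And>p. fst (Q p) > 0 \<and> (\<forall>y\<in>ball p (fst (Q p)). y \<notin> S \<longrightarrow> norm (F y) \<le> snd (Q p))"
    using choice[of "\<lambda>p q. fst q > 0 \<and> (\<forall>y\<in>ball p (fst q). y \<notin> S \<longrightarrow> norm (F y) \<le> snd q)"] by blast
  define rr where "rr p = fst (Q p)" for p
  define BB where "BB p = snd (Q p)" for p
  have rB: "\<And>p. rr p > 0" "\<And>p y. y \<in> ball p (rr p) \<Longrightarrow> y \<notin> S \<Longrightarrow> norm (F y) \<le> BB p"
    using Q unfolding rr_def BB_def by auto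
  have cov: "P0 \<subseteq> (\<Union>c\<in>P0. ball c (rr c))" using rB(1) by force
  obtain C where C: "C \<subseteq> P0" "finite C" "P0 \<subseteq> (\<Union>c\<in>C. ball c (rr c))"
    by (rule compactE_image[OF P0_compact _ cov]) auto
  define B where "B = (\<Sum>c\<in>C. \<bar>BB c\<bar>)"
  have P0b: "norm (F y) \<le> B" if yP: "y \<in> P0" and yS: "y \<notin> S" for y
  proof -
    obtain c where c: "c \<in> C" "y \<in> ball c (rr c)" using C(3) yP by blast
    have "norm (F y) \<le> BB c" using rB(2)[OF c(2) yS] .
    also have "\<dots> \<le> \<bar>BB c\<bar>" by simp
    also have "\<dots> \<le> B" unfolding B_def by (rule member_le_sum) (use c C in auto)
    finally show ?thesis .
  qed
  show ?thesis
  proof (intro exI allI impI)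
    fix y assume y: "y \<notin> S"
    obtain a where a: "a \<in> L" "y - a \<in> P0" using decomp by blast
    have y': "y - a \<notin> S" using S_shift[OF lat_uminus[OF a(1)], of y] y by simp
    have "F y = F ((y - a) + a)" by simp
    also have "\<dots> = F (y - a)" by (rule F_per[OF a(1) y'])
    finally show "norm (F y) \<le> B" using P0b[OF a(2) y'] by simp
  qed
qed

lemma F_zero: "y \<notin> S \<Longrightarrow> F y = 0"
proof -
  obtain B where B: "\<And>y. y \<notin> S \<Longrightarrow> norm (F y) \<le> B" using F_bounded by blast
  have ext: "\<exists>d>0. \<exists>h. h holomorphic_on ball p d \<and> (\<forall>y\<in>ball p d - {p}. h y = F y \<and> y \<notin> S)
      \<and> (F \<longlongrightarrow> h p) (at p) \<and> norm (h p) \<le> B" if p: "p \<in> S" for p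
  proof -
    obtain d where d: "d > 0" "\<And>y. y \<noteq> p \<Longrightarrow> dist y p < d \<Longrightarrow> y \<notin> S"
      using ev_notS[of p] unfolding eventually_at by auto
    have dS: "\<forall>y\<in>ball p d - {p}. y \<notin> S" using d by (auto simp: dist_commute)
    have Fh: "F holomorphic_on (ball p d - {p})"
      by (rule holomorphic_on_subset[OF F_holo]) (use dS in auto)
    have "\<exists>h. h holomorphic_on ball p d \<and> (\<forall>z \<in> ball p d - {p}. h z = F z)"
      using holomorphic_on_extend_bounded[OF Fh] d(1) lb_F[of p] unfolding lb_def by simp
    then obtain h where h: "h holomorphic_on ball p d" "\<And>z. z \<in> ball p d - {p} \<Longrightarrow> h z = F z" by blast
    have "isCont h p" by (rule cont_at_open[OF h(1)]) (use d in auto)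
    then have "(h \<longlongrightarrow> h p) (at p)" by (simp add: isCont_def)
    moreover have "\<forall>\<^sub>F y in at p. h y = F y"
      using eventually_at_ball'[OF d(1), of p UNIV] by eventually_elim (use h(2) in auto)
    ultimately have lim: "(F \<longlongrightarrow> h p) (at p)" by (simp add: tendsto_cong)
    have "\<forall>\<^sub>F y in at p. norm (F y) \<le> B"
      using ev_notS[of p] by eventually_elim (rule B)
    then have "norm (h p) \<le> B" by (intro Lim_norm_ubound[OF _ lim]) auto
    then show ?thesis using h(1) lim d(1) dS h(2) by (intro exI[of _ d] conjI exI[of _ h]) auto
  qed
  define g where "g y = (if y \<in> S then Lim (at y) F else F y)" for y
  have gd: "\<exists>f'. (g has_field_derivative f') (at p)" for p
  proof (cases "p \<in> S")
    case False
    have "\<forall>x\<in>- S. \<exists>f'. (F has_field_derivative f') (at x)"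
      using F_holo by (subst (asm) holomorphic_on_open[OF open_nS])
    then obtain f' where "(F has_field_derivative f') (at p)" using False by blast
    then have "(g has_field_derivative f') (at p)"
      by (rule has_field_derivative_transform_within_open[OF _ open_nS]) (use False in \<open>auto simp: g_def\<close>)
    then show ?thesis by blast
  next
    case True
    obtain d h where dh: "d > 0" "h holomorphic_on ball p d" "\<forall>y\<in>ball p d - {p}. h y = F y \<and> y \<notin> S"
      "(F \<longlongrightarrow> h p) (at p)" using ext[OF True] by blast
    have "\<forall>x\<in>ball p d. \<exists>f'. (h has_field_derivative f') (at x)"
      using dh(2) by (subst (asm) holomorphic_on_open[OF open_ball])
    moreover have "p \<in> ball p d" using dh(1) by simp
    ultimately obtain f' where hd: "(h has_field_derivative f') (at p)" by blast
    have hg: "h y = g y" if "y \<in> ball p d" for y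
    proof (cases "y = p")
      case True
      then show ?thesis using \<open>p \<in> S\<close> dh(4) by (simp add: g_def tendsto_Lim)
    next
      case False
      then show ?thesis using dh(3) that by (simp add: g_def)
    qed
    have "(g has_field_derivative f') (at p)"
      by (rule has_field_derivative_transform_within_open[OF hd open_ball]) (use dh(1) hg in auto)
    then show ?thesis by blast
  qed
  have gh: "g holomorphic_on UNIV" by (subst holomorphic_on_open[OF open_UNIV]) (use gd in blast)
  have gB: "norm (g y) \<le> B" for y
  proof (cases "y \<in> S")
    case True
    obtain d h where "(F \<longlongrightarrow> h y) (at y)" "norm (h y) \<le> B" using ext[OF True] by blast
    then show ?thesis using True by (simp add: g_def tendsto_Lim)
  next
    case False
    then show ?thesis using B by (simp add: g_def)
  qed
  have "bounded (range g)" using gB by (auto simp: bounded_iff)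
  then obtain c where c: "\<And>y. g y = c"
    using Liouville_theorem[OF gh] unfolding constant_on_def by blast
  have Fc: "F y = c" if "y \<notin> S" for y using c[of y] that by (simp add: g_def)
  obtain d where d: "d > 0" "\<And>y. y \<noteq> 0 \<Longrightarrow> dist y 0 < d \<Longrightarrow> y \<notin> S"
    using ev_notS[of 0] unfolding eventually_at by auto
  define y0 where "y0 = complex_of_real (d/2)"
  have y0: "y0 \<notin> S" using d by (intro d(2)) (auto simp: y0_def dist_norm)
  have "c = F (- y0)" using Fc[OF F_odd(1)[OF y0]] by simp
  also have "\<dots> = - c" using F_odd(2)[OF y0] Fc[OF y0] by simp
  finally have "c = 0" by simp
  then show "y \<notin> S \<Longrightarrow> F y = 0" using Fc by simp
qed

end

context wlat begin

lemma add_thm: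
  assumes "x \<notin> L" "y \<notin> L" "y + x \<notin> L" "y - x \<notin> L"
  shows "(wzeta w1 w2 (y + x) + wzeta w1 w2 (y - x) - 2 * wzeta w1 w2 y) * (wp w1 w2 y - wp w1 w2 x) = Pd y"
proof -
  interpret A: wadd w1 w2 x by unfold_locales (rule assms(1))
  have "y \<notin> A.S" using assms by (simp add: A.notS)
  then have "A.F y = 0" by (rule A.F_zero)
  then show ?thesis by (simp add: A.F_def)
qed

lemma key:
  fixes N :: complex
  assumes xL: "x \<notin> L" and yL: "y \<notin> L" and yx: "y + x \<notin> L"
    and alt: "N = 1 \<or> y - x \<notin> L"
  shows "Pd x - N * Pd y = (wp w1 w2 x - wp w1 w2 y) *
     ((N + 1) * wzeta w1 w2 (y + x) - 2 * N * wzeta w1 w2 y + (N - 1) * wzeta w1 w2 (y - x) - 2 * wzeta w1 w2 x)"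
proof (cases "y - x \<in> L")
  case True
  then have N: "N = 1" using alt by blast
  have "y = x + (y - x)" by simp
  then have "wp w1 w2 y = wp w1 w2 x" "Pd y = Pd x"
    using wp_periodic[OF True xL] Pd_periodic[OF True, of x] by simp_all
  then show ?thesis using N by simp
next
  case False
  have A: "(wzeta w1 w2 (y + x) + wzeta w1 w2 (y - x) - 2 * wzeta w1 w2 y) * (wp w1 w2 y - wp w1 w2 x) = Pd y"
    by (rule add_thm[OF xL yL yx False])
  have xy: "x + y \<notin> L" using yx by (simp add: add.commute)
  have xmy: "x - y \<notin> L" using False lat_uminus_iff[of "x - y"] by simp
  have B: "(wzeta w1 w2 (x + y) + wzeta w1 w2 (x - y) - 2 * wzeta w1 w2 x) * (wp w1 w2 x - wp w1 w2 y) = Pd x"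
    by (rule add_thm[OF yL xL xy xmy])
  have "x - y = - (y - x)" by simp
  then have odd: "wzeta w1 w2 (x - y) = - wzeta w1 w2 (y - x)" using wzeta_odd[of "y - x"] by simp
  have e: "x + y = y + x" by simp
  have B': "(wzeta w1 w2 (y + x) - wzeta w1 w2 (y - x) - 2 * wzeta w1 w2 x) * (wp w1 w2 x - wp w1 w2 y) = Pd x"
    using B[unfolded e odd] by simp
  show ?thesis unfolding A[symmetric] B'[symmetric] by (simp add: algebra_simps)
qed

lemma wp_chain:
  "g t \<notin> L \<Longrightarrow> (g has_field_derivative g') (at t) \<Longrightarrow>
    ((\<lambda>t. wp w1 w2 (g t)) has_field_derivative Pd (g t) * g') (at t)"
  by (rule DERIV_chain2[OF wp_deriv])

lemma wzeta_chain:
  "g t \<notin> L \<Longrightarrow> (g has_field_derivative g') (at t) \<Longrightarrow>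
    ((\<lambda>t. wzeta w1 w2 (g t)) has_field_derivative - wp w1 w2 (g t) * g') (at t)"
  by (rule DERIV_chain2[OF wzeta_deriv])

end

lemma lin_deriv: "((\<lambda>t. a * (t + b) + c) has_field_derivative a) (at t)" for a b c t :: complex
  by (auto intro!: derivative_eq_intros)

lemma lin_deriv': "((\<lambda>t. a * (t + b)) has_field_derivative a) (at t)" for a b t :: complex
  by (auto intro!: derivative_eq_intros)


lemma tb_eq: "toda_b w1 w2 w \<beta> q \<mu>1 n t = \<mu>1 + w * (of_nat n + 1) * wzeta w1 w2 ((of_nat n * w * (t + \<beta>) + q) + w * (t + \<beta>))
   - w * of_nat n * wzeta w1 w2 (of_nat n * w * (t + \<beta>) + q) - (2 * of_nat n + 1) * w * wzeta w1 w2 (w * (t + \<beta>))"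
proof -
  have e1: "w * (of_nat n + 1) * (t + \<beta>) + q = (of_nat n * w * (t + \<beta>) + q) + w * (t + \<beta>)"
    by (simp add: algebra_simps)
  have e2: "w * of_nat n * (t + \<beta>) + q = of_nat n * w * (t + \<beta>) + q" by (simp add: algebra_simps)
  show ?thesis unfolding toda_b_def e1 e2 by (rule refl)
qed

theorem lemma1:
  fixes w1 w2 e1 e2 e3 w \<beta> q \<mu>1 :: complex
  assumes nondeg: "Im (w2 / w1) \<noteq> 0"
    and esum: "e1 + e2 + e3 = 0"
    and wp_ode: "\<forall>z. z \<notin> lattice w1 w2 \<longrightarrow>
       (deriv (wp w1 w2) z)\<^sup>2 = 4 * (wp w1 w2 z - e1) * (wp w1 w2 z - e2) * (wp w1 w2 z - e3)"
  shows "(\<forall>t. toda_u w1 w2 w \<beta> q 0 t = 0)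
    \<and> (\<forall>n\<ge>1. \<forall>t. toda_regular w1 w2 w \<beta> q (n - 1) t \<and> toda_regular w1 w2 w \<beta> q n t
           \<and> toda_regular w1 w2 w \<beta> q (n + 1) t \<longrightarrow>
         (toda_u w1 w2 w \<beta> q n has_field_derivative
            toda_u w1 w2 w \<beta> q n t *
              (toda_b w1 w2 w \<beta> q \<mu>1 n t - toda_b w1 w2 w \<beta> q \<mu>1 (n - 1) t)) (at t))
    \<and> (\<forall>n. \<forall>t. toda_regular w1 w2 w \<beta> q n t \<and> toda_regular w1 w2 w \<beta> q (n + 1) t \<longrightarrow>
         (toda_b w1 w2 w \<beta> q \<mu>1 n has_field_derivative
            toda_u w1 w2 w \<beta> q (n + 1) t - toda_u w1 w2 w \<beta> q n t) (at t))"
proof -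
  interpret wlat w1 w2 by unfold_locales (rule nondeg)
  have part1: "\<forall>t. toda_u w1 w2 w \<beta> q 0 t = 0" by (simp add: toda_u_def)
  have part3: "(toda_b w1 w2 w \<beta> q \<mu>1 n has_field_derivative
            toda_u w1 w2 w \<beta> q (n + 1) t - toda_u w1 w2 w \<beta> q n t) (at t)"
    if r1: "toda_regular w1 w2 w \<beta> q n t" and r2: "toda_regular w1 w2 w \<beta> q (n + 1) t" for n t
  proof -
    have XL: "w * (t + \<beta>) \<notin> L" using r1 by (simp add: toda_regular_def)
    have e: "of_nat (n + 1) * w * (t + \<beta>) + q = (of_nat n * w * (t + \<beta>) + q) + w * (t + \<beta>)"
      by (simp add: algebra_simps)
    have YXL: "(of_nat n * w * (t + \<beta>) + q) + w * (t + \<beta>) \<notin> L"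
      using r2 unfolding toda_regular_def e by simp
    have D1: "((\<lambda>t. wzeta w1 w2 ((of_nat n * w * (t + \<beta>) + q) + w * (t + \<beta>))) has_field_derivative
        - wp w1 w2 ((of_nat n * w * (t + \<beta>) + q) + w * (t + \<beta>)) * (of_nat n * w + w)) (at t)"
      by (rule wzeta_chain[where g="\<lambda>t. (of_nat n * w * (t + \<beta>) + q) + w * (t + \<beta>)" and t=t, OF YXL]) (auto intro!: derivative_eq_intros simp: algebra_simps)
    have D2: "((\<lambda>t. w * of_nat n * wzeta w1 w2 (of_nat n * w * (t + \<beta>) + q)) has_field_derivative
        w * of_nat n * (- wp w1 w2 (of_nat n * w * (t + \<beta>) + q) * (of_nat n * w))) (at t)"
    proof (cases "n = 0")
      case True
      then show ?thesis by simp
    next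
      case False
      then have YL: "of_nat n * w * (t + \<beta>) + q \<notin> L" using r1 by (simp add: toda_regular_def)
      show ?thesis
        by (rule DERIV_cmult, rule wzeta_chain[where g="\<lambda>t. of_nat n * w * (t + \<beta>) + q" and t=t, OF YL]) (auto intro!: derivative_eq_intros simp: algebra_simps)
    qed
    have D3: "((\<lambda>t. wzeta w1 w2 (w * (t + \<beta>))) has_field_derivative - wp w1 w2 (w * (t + \<beta>)) * w) (at t)"
      by (rule wzeta_chain[where g="\<lambda>t. w * (t + \<beta>)" and t=t, OF XL]) (auto intro!: derivative_eq_intros)
    have D: "((\<lambda>t. \<mu>1 + w * (of_nat n + 1) * wzeta w1 w2 ((of_nat n * w * (t + \<beta>) + q) + w * (t + \<beta>))
       - w * of_nat n * wzeta w1 w2 (of_nat n * w * (t + \<beta>) + q) - (2 * of_nat n + 1) * w * wzeta w1 w2 (w * (t + \<beta>)))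
       has_field_derivative
        0 + w * (of_nat n + 1) * (- wp w1 w2 ((of_nat n * w * (t + \<beta>) + q) + w * (t + \<beta>)) * (of_nat n * w + w))
        - w * of_nat n * (- wp w1 w2 (of_nat n * w * (t + \<beta>) + q) * (of_nat n * w))
        - (2 * of_nat n + 1) * w * (- wp w1 w2 (w * (t + \<beta>)) * w)) (at t)"
      by (rule DERIV_diff[OF DERIV_diff[OF DERIV_add[OF DERIV_const DERIV_cmult[OF D1]] D2] DERIV_cmult[OF D3]])
    have fun_eq: "toda_b w1 w2 w \<beta> q \<mu>1 n = (\<lambda>t. \<mu>1 + w * (of_nat n + 1) * wzeta w1 w2 ((of_nat n * w * (t + \<beta>) + q) + w * (t + \<beta>))
       - w * of_nat n * wzeta w1 w2 (of_nat n * w * (t + \<beta>) + q) - (2 * of_nat n + 1) * w * wzeta w1 w2 (w * (t + \<beta>)))"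
      by (rule ext) (rule tb_eq)
    have val: "0 + w * (of_nat n + 1) * (- wp w1 w2 ((of_nat n * w * (t + \<beta>) + q) + w * (t + \<beta>)) * (of_nat n * w + w))
        - w * of_nat n * (- wp w1 w2 (of_nat n * w * (t + \<beta>) + q) * (of_nat n * w))
        - (2 * of_nat n + 1) * w * (- wp w1 w2 (w * (t + \<beta>)) * w)
        = toda_u w1 w2 w \<beta> q (n + 1) t - toda_u w1 w2 w \<beta> q n t"
      unfolding toda_u_def e by (simp add: algebra_simps power2_eq_square)
    show ?thesis using D unfolding fun_eq val .
  qed
  have part2: "(toda_u w1 w2 w \<beta> q n has_field_derivative
            toda_u w1 w2 w \<beta> q n t *
              (toda_b w1 w2 w \<beta> q \<mu>1 n t - toda_b w1 w2 w \<beta> q \<mu>1 (n - 1) t)) (at t)"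
    if n1: "n \<ge> 1" and r0: "toda_regular w1 w2 w \<beta> q (n - 1) t" and r1: "toda_regular w1 w2 w \<beta> q n t"
      and r2: "toda_regular w1 w2 w \<beta> q (n + 1) t" for n t
  proof -
    have XL: "w * (t + \<beta>) \<notin> L" using r1 by (simp add: toda_regular_def)
    have YL: "of_nat n * w * (t + \<beta>) + q \<notin> L" using r1 n1 by (simp add: toda_regular_def)
    have e: "of_nat (n + 1) * w * (t + \<beta>) + q = (of_nat n * w * (t + \<beta>) + q) + w * (t + \<beta>)"
      by (simp add: algebra_simps)
    have YXL: "(of_nat n * w * (t + \<beta>) + q) + w * (t + \<beta>) \<notin> L"
      using r2 unfolding toda_regular_def e by simp
    have o: "(of_nat (n - 1) :: complex) = of_nat n - 1" using n1 by (simp add: of_nat_diff)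
    have a1: "of_nat (n - 1) * w * (t + \<beta>) + q = (of_nat n * w * (t + \<beta>) + q) - w * (t + \<beta>)"
      unfolding o by (simp add: algebra_simps)
    have alt: "(of_nat n :: complex) = 1 \<or> (of_nat n * w * (t + \<beta>) + q) - w * (t + \<beta>) \<notin> L"
    proof (cases "n = 1")
      case False
      then have "n - 1 \<noteq> 0" using n1 by simp
      then show ?thesis using r0 unfolding toda_regular_def a1 by simp
    qed simp
    have K: "Pd (w * (t + \<beta>)) - of_nat n * Pd (of_nat n * w * (t + \<beta>) + q) =
        (wp w1 w2 (w * (t + \<beta>)) - wp w1 w2 (of_nat n * w * (t + \<beta>) + q)) *
        ((of_nat n + 1) * wzeta w1 w2 ((of_nat n * w * (t + \<beta>) + q) + w * (t + \<beta>))
         - 2 * of_nat n * wzeta w1 w2 (of_nat n * w * (t + \<beta>) + q)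
         + (of_nat n - 1) * wzeta w1 w2 ((of_nat n * w * (t + \<beta>) + q) - w * (t + \<beta>))
         - 2 * wzeta w1 w2 (w * (t + \<beta>)))"
      by (rule key[OF XL YL YXL alt])
    have bdiff: "toda_b w1 w2 w \<beta> q \<mu>1 n t - toda_b w1 w2 w \<beta> q \<mu>1 (n - 1) t = w *
        ((of_nat n + 1) * wzeta w1 w2 ((of_nat n * w * (t + \<beta>) + q) + w * (t + \<beta>))
         - 2 * of_nat n * wzeta w1 w2 (of_nat n * w * (t + \<beta>) + q)
         + (of_nat n - 1) * wzeta w1 w2 ((of_nat n * w * (t + \<beta>) + q) - w * (t + \<beta>))
         - 2 * wzeta w1 w2 (w * (t + \<beta>)))"
      unfolding tb_eq unfolding a1 unfolding o by (simp add: algebra_simps)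
    have D1: "((\<lambda>t. wp w1 w2 (w * (t + \<beta>))) has_field_derivative Pd (w * (t + \<beta>)) * w) (at t)"
      by (rule wp_chain[where g="\<lambda>t. w * (t + \<beta>)" and t=t, OF XL]) (auto intro!: derivative_eq_intros)
    have D2: "((\<lambda>t. wp w1 w2 (of_nat n * w * (t + \<beta>) + q)) has_field_derivative
        Pd (of_nat n * w * (t + \<beta>) + q) * (of_nat n * w)) (at t)"
      by (rule wp_chain[where g="\<lambda>t. of_nat n * w * (t + \<beta>) + q" and t=t, OF YL]) (auto intro!: derivative_eq_intros simp: algebra_simps)
    have D: "(toda_u w1 w2 w \<beta> q n has_field_derivative
        w\<^sup>2 * (of_nat n)\<^sup>2 * (Pd (w * (t + \<beta>)) * w - Pd (of_nat n * w * (t + \<beta>) + q) * (of_nat n * w))) (at t)"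
      unfolding toda_u_def[abs_def] by (rule DERIV_cmult[OF DERIV_diff[OF D1 D2]])
    have "w\<^sup>2 * (of_nat n)\<^sup>2 * (Pd (w * (t + \<beta>)) * w - Pd (of_nat n * w * (t + \<beta>) + q) * (of_nat n * w))
        = w\<^sup>2 * (of_nat n)\<^sup>2 * w * (Pd (w * (t + \<beta>)) - of_nat n * Pd (of_nat n * w * (t + \<beta>) + q))"
      by (simp add: algebra_simps)
    also have "\<dots> = toda_u w1 w2 w \<beta> q n t *
              (toda_b w1 w2 w \<beta> q \<mu>1 n t - toda_b w1 w2 w \<beta> q \<mu>1 (n - 1) t)"
      unfolding K bdiff toda_u_def by (simp add: algebra_simps)
    finally show ?thesis using D by simp
  qed
  show ?thesis using part1 part2 part3 by blast
qed

end
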